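(* Let $k\ge0$ and assume $\mu,\beta\in C^k(\mathbb R^N,L^\infty_+(0,a_2))$, with $\underline\beta$ not a.e. zero on $(0,a_2)$. For $x\in\mathbb R^N$ let $\alpha(x)$ be the unique real number with $\int_0^{a_2}\beta(a,x)e^{-\alpha(x)a}\pi(0,a,x)da=1$ and $\phi(a,x)=e^{-\alpha(x)a}\pi(0,a,x)$, so that $(0,\phi(\cdot,x))$ is the principal eigenvector of $A(x)+F(x)$ for the eigenvalue $\alpha(x)$, normalized by $\int_0^{a_2}\beta(a,x)\phi(a,x)da=1$. Then the map $x\mapsto\big((0,\phi(\cdot,x)),\alpha(x)\big)$ is of class $C^k$ from $\mathbb R^N$ into $\{0\}\times C([0,a_2])\times\mathbb R$.
   Context: $a_2>0$ is a finite age, $\pi(\tau,a,x)=\exp(-\int_\tau^a\mu(s,x)ds)$, and $\underline\beta(a)=\inf_{x}\beta(a,x)$ over the relevant points with $\underline\beta\le\beta(\cdot,x)$ for all $x\in\mathbb R^N$. For $x\in\mathbb R^N$, $A(x):\{0\}\times W^{1,1}(0,a_2)\to\mathbb R\times L^1(0,a_2)$, $A(x)(0,u)=(-u(0),-\partial_au-\mu(\cdot,x)u)$, and $F(x)(0,u)=(\int_0^{a_2}\beta(a,x)u(a)da,0)$. *)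

theory Defs
  imports "HOL-Analysis.Analysis" "HOL-Probability.Essential_Supremum" "HOL-Library.Function_Algebras"
begin

instantiation "fun" :: (type, real_vector) real_vector
begin
definition scaleR_fun_def: "scaleR r f = (\<lambda>x. r *\<^sub>R f x)"
instance
  by standard (simp_all add: scaleR_fun_def fun_eq_iff scaleR_add_right scaleR_add_left)
end

text \<open>C^k maps from R^N into a (semi)normed function space, given by a membership
  predicate S and a (semi)norm nrm.\<close>

fun Ck_wrt :: "('v::real_vector \<Rightarrow> bool) \<Rightarrow> ('v \<Rightarrow> real) \<Rightarrow> nat \<Rightarrow> (real^'n \<Rightarrow> 'v) \<Rightarrow> bool" where
  "Ck_wrt S nrm 0 f \<longleftrightarrow>
     (\<forall>x. S (f x)) \<and> (\<forall>x. ((\<lambda>y. nrm (f y - f x)) \<longlongrightarrow> 0) (at x))"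
| "Ck_wrt S nrm (Suc k) f \<longleftrightarrow>
     (\<forall>x. S (f x)) \<and>
     (\<exists>D :: 'n \<Rightarrow> real^'n \<Rightarrow> 'v.
        (\<forall>i x. S (D i x)) \<and>
        (\<forall>x. ((\<lambda>y. nrm (f y - f x - (\<Sum>i\<in>UNIV. ((y - x) $ i) *\<^sub>R D i x)) / norm (y - x))
                 \<longlongrightarrow> 0) (at x)) \<and>
        (\<forall>i. Ck_wrt S nrm k (D i)))"

definition Linf_mem :: "real \<Rightarrow> (real \<Rightarrow> real) \<Rightarrow> bool" where
  "Linf_mem a2 u \<longleftrightarrow> u \<in> borel_measurable (lebesgue_on {0<..<a2}) \<and>
     esssup (lebesgue_on {0<..<a2}) (\<lambda>a. ereal \<bar>u a\<bar>) < \<infinity>"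

definition Linf_nrm :: "real \<Rightarrow> (real \<Rightarrow> real) \<Rightarrow> real" where
  "Linf_nrm a2 u = real_of_ereal (esssup (lebesgue_on {0<..<a2}) (\<lambda>a. ereal \<bar>u a\<bar>))"

definition Linf_plus :: "real \<Rightarrow> (real \<Rightarrow> real) \<Rightarrow> bool" where
  "Linf_plus a2 u \<longleftrightarrow> Linf_mem a2 u \<and> (AE a in lebesgue_on {0<..<a2}. u a \<ge> 0)"

text \<open>Target space {0} x C([0,a2]) x R (the trivial first factor is dropped).\<close>

definition CR_mem :: "real \<Rightarrow> (real \<Rightarrow> real) \<times> real \<Rightarrow> bool" where
  "CR_mem a2 p \<longleftrightarrow> continuous_on {0..a2} (fst p)"

definition CR_nrm :: "real \<Rightarrow> (real \<Rightarrow> real) \<times> real \<Rightarrow> real" where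
  "CR_nrm a2 p = max (SUP a\<in>{0..a2}. \<bar>fst p a\<bar>) \<bar>snd p\<bar>"

definition surv :: "(real^'n \<Rightarrow> real \<Rightarrow> real) \<Rightarrow> real \<Rightarrow> real \<Rightarrow> real^'n \<Rightarrow> real" where
  "surv mu \<tau> a x = exp (- (LINT s:{\<tau>..a}|lebesgue. mu x s))"

end

theory Submission
  imports Defs
begin

definition good :: "('v::real_vector \<Rightarrow> bool) \<Rightarrow> ('v \<Rightarrow> real) \<Rightarrow> bool" where
  "good S n \<longleftrightarrow> S 0 \<and> (\<forall>u v. S u \<longrightarrow> S v \<longrightarrow> S (u + v)) \<and> (\<forall>r u. S u \<longrightarrow> S (r *\<^sub>R u))
     \<and> (\<forall>u. S u \<longrightarrow> 0 \<le> n u) \<and> (\<forall>u v. S u \<longrightarrow> S v \<longrightarrow> n (u + v) \<le> n u + n v)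
     \<and> (\<forall>r u. S u \<longrightarrow> n (r *\<^sub>R u) \<le> \<bar>r\<bar> * n u)"

lemma goodD:
  assumes "good S n"
  shows "S 0" "S u \<Longrightarrow> S v \<Longrightarrow> S (u + v)" "S u \<Longrightarrow> S (r *\<^sub>R u)" "S u \<Longrightarrow> 0 \<le> n u"
    "S u \<Longrightarrow> S v \<Longrightarrow> n (u + v) \<le> n u + n v" "S u \<Longrightarrow> n (r *\<^sub>R u) \<le> \<bar>r\<bar> * n u"
  using assms unfolding good_def by simp_all

lemma good_neg: "good S n \<Longrightarrow> S u \<Longrightarrow> S (- u)"
  using goodD(3)[of S n u "-1"] by simp

lemma good_diff: "good S n \<Longrightarrow> S u \<Longrightarrow> S v \<Longrightarrow> S (u - v)"
  using goodD(2)[of S n u "-v"] good_neg[of S n v] by simp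

lemma good_nneg: "good S n \<Longrightarrow> S u \<Longrightarrow> n (- u) \<le> n u"
  using goodD(6)[of S n u "-1"] by simp

lemma good_ndiff: "good S n \<Longrightarrow> S u \<Longrightarrow> S v \<Longrightarrow> n (u - v) \<le> n u + n v"
  using goodD(5)[of S n u "-v"] good_nneg[of S n v] good_neg[of S n v] by simp

lemma good_sum: assumes g: "good S n" shows "finite A \<Longrightarrow> (\<And>i. i \<in> A \<Longrightarrow> S (f i)) \<Longrightarrow> S (\<Sum>i\<in>A. f i)"
  by (induction A rule: finite_induct) (simp_all add: goodD(1,2)[OF g])

lemma good_nsum: assumes g: "good S n" shows "finite A \<Longrightarrow> (\<And>i. i \<in> A \<Longrightarrow> S (f i)) \<Longrightarrow> n (\<Sum>i\<in>A. f i) \<le> (\<Sum>i\<in>A. n (f i))"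
proof (induction A rule: finite_induct)
  case empty
  then show ?case using goodD(6)[OF g goodD(1)[OF g], of 0] by simp
next
  case (insert x F)
  have "n (f x + sum f F) \<le> n (f x) + n (sum f F)"
    using goodD(5)[OF g, of "f x" "sum f F"] good_sum[OF g insert(1), of f] insert(4) by force
  then show ?case using insert by simp
qed

definition rem :: "(real^'n \<Rightarrow> 'v::real_vector) \<Rightarrow> ('n \<Rightarrow> real^'n \<Rightarrow> 'v) \<Rightarrow> real^'n \<Rightarrow> real^'n \<Rightarrow> 'v" where
  "rem f D x y = f y - f x - (\<Sum>i\<in>UNIV. ((y - x) $ i) *\<^sub>R D i x)"

lemma Ck_Suc_iff: "Ck_wrt S n (Suc k) f \<longleftrightarrow> (\<forall>x. S (f x)) \<and> (\<exists>D. (\<forall>i x. S (D i x)) \<and>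
   (\<forall>x. ((\<lambda>y. n (rem f D x y) / norm (y - x)) \<longlongrightarrow> 0) (at x)) \<and> (\<forall>i. Ck_wrt S n k (D i)))"
  by (simp add: rem_def)

declare Ck_wrt.simps(2)[simp del]

lemma Ck_S: "Ck_wrt S n k f \<Longrightarrow> S (f x)"
  by (cases k) (auto simp: Ck_Suc_iff)

lemma lin_part_S: assumes "good S n" "\<And>i. S (D i x)" shows "S (\<Sum>i\<in>UNIV. (h $ i) *\<^sub>R D i x)"
  by (rule good_sum[OF assms(1)]) (simp_all add: goodD(3)[OF assms(1)] assms(2))

lemma lin_part_bound:
  assumes "good S n" "\<And>i. S (D i x)"
  shows "n (\<Sum>i\<in>UNIV. (h $ i) *\<^sub>R D i x) \<le> norm h * (\<Sum>i\<in>UNIV. n (D i x))"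
proof -
  have "n (\<Sum>i\<in>UNIV. (h $ i) *\<^sub>R D i x) \<le> (\<Sum>i\<in>UNIV. n ((h $ i) *\<^sub>R D i x))"
    by (rule good_nsum[OF assms(1)]) (simp_all add: goodD(3)[OF assms(1)] assms(2))
  also have "\<dots> \<le> (\<Sum>i\<in>UNIV. norm h * n (D i x))"
  proof (rule sum_mono)
    fix i
    have "n ((h $ i) *\<^sub>R D i x) \<le> \<bar>h $ i\<bar> * n (D i x)" using goodD(6)[OF assms(1) assms(2)] by blast
    also have "\<dots> \<le> norm h * n (D i x)"
      by (rule mult_right_mono) (simp_all add: component_le_norm_cart goodD(4)[OF assms(1) assms(2)])
    finally show "n ((h $ i) *\<^sub>R D i x) \<le> norm h * n (D i x)" .
  qed
  finally show ?thesis by (simp add: sum_distrib_left)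
qed

lemma rem_S: "good S n \<Longrightarrow> S (f y) \<Longrightarrow> S (f x) \<Longrightarrow> (\<And>i. S (D i x)) \<Longrightarrow> S (rem f D x y)"
  unfolding rem_def by (intro good_diff[of S n] lin_part_S[of S n]) auto

lemma diff_bound_from_rem:
  assumes g: "good S n" and S: "\<And>x. S (f x)" "\<And>i. S (D i x)"
  shows "n (f y - f x) \<le> n (rem f D x y) + norm (y - x) * (\<Sum>i\<in>UNIV. n (D i x))"
proof -
  have "f y - f x = rem f D x y + (\<Sum>i\<in>UNIV. ((y - x) $ i) *\<^sub>R D i x)" by (simp add: rem_def)
  then have "n (f y - f x) \<le> n (rem f D x y) + n (\<Sum>i\<in>UNIV. ((y - x) $ i) *\<^sub>R D i x)"
    using goodD(5)[OF g rem_S[of S n f y x D, OF g S(1) S(1) S(2)] lin_part_S[of S n D x "y - x", OF g S(2)]] by metis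
  also have "\<dots> \<le> n (rem f D x y) + norm (y - x) * (\<Sum>i\<in>UNIV. n (D i x))"
    using lin_part_bound[of S n D x "y - x", OF g S(2)] by simp
  finally show ?thesis .
qed

lemma rem_to_zero:
  assumes "((\<lambda>y. n (rem f D x y) / norm (y - x)) \<longlongrightarrow> 0) (at x)"
  shows "((\<lambda>y. n (rem f D x y)) \<longlongrightarrow> 0) (at x)"
proof -
  have "((\<lambda>y. n (rem f D x y) / norm (y - x) * norm (y - x)) \<longlongrightarrow> 0 * 0) (at x)"
    by (intro tendsto_mult assms) (auto intro!: tendsto_eq_intros simp: LIM_zero_iff)
  moreover have "\<forall>\<^sub>F y in at x. n (rem f D x y) / norm (y - x) * norm (y - x) = n (rem f D x y)"
    by (auto simp: eventually_at_filter)
  ultimately show ?thesis by (auto intro: Lim_transform_eventually)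
qed

lemma Ck_cont:
  assumes g: "good S n" and "Ck_wrt S n k f"
  shows "((\<lambda>y. n (f y - f x)) \<longlongrightarrow> 0) (at x)"
proof (cases k)
  case 0 then show ?thesis using assms by simp
next
  case (Suc m)
  then obtain D where S: "\<And>x. S (f x)" "\<And>i x. S (D i x)"
    and R: "((\<lambda>y. n (rem f D x y) / norm (y - x)) \<longlongrightarrow> 0) (at x)"
    using assms(2)[unfolded Suc Ck_Suc_iff] by blast
  have "((\<lambda>y. n (rem f D x y) + norm (y - x) * (\<Sum>i\<in>UNIV. n (D i x))) \<longlongrightarrow> 0 + 0 * (\<Sum>i\<in>UNIV. n (D i x))) (at x)"
    by (intro tendsto_add tendsto_mult rem_to_zero[OF R] tendsto_const)
      (auto intro!: tendsto_eq_intros simp: LIM_zero_iff)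
  then have L: "((\<lambda>y. n (rem f D x y) + norm (y - x) * (\<Sum>i\<in>UNIV. n (D i x))) \<longlongrightarrow> 0) (at x)" by simp
  show ?thesis
  proof (rule tendsto_sandwich[OF _ _ tendsto_const L])
    show "\<forall>\<^sub>F y in at x. 0 \<le> n (f y - f x)"
      using goodD(4)[OF g good_diff[OF g S(1) S(1)]] by simp
    show "\<forall>\<^sub>F y in at x. n (f y - f x) \<le> n (rem f D x y) + norm (y - x) * (\<Sum>i\<in>UNIV. n (D i x))"
      using diff_bound_from_rem[of S n f D x, OF g S(1) S(2)] by simp
  qed
qed

lemma Ck_Suc_mono: "good S n \<Longrightarrow> Ck_wrt S n (Suc k) f \<Longrightarrow> Ck_wrt S n k f"
proof (induction k arbitrary: f)
  case 0
  then show ?case using Ck_cont[OF 0(1) 0(2)] Ck_S[OF 0(2)] by simp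
next
  case (Suc k)
  from Suc.prems(2)[unfolded Ck_Suc_iff[of S n "Suc k" f]] obtain D where "\<forall>x. S (f x)" "\<forall>i x. S (D i x)"
    "\<forall>x. ((\<lambda>y. n (rem f D x y) / norm (y - x)) \<longlongrightarrow> 0) (at x)"
    "\<forall>i. Ck_wrt S n (Suc k) (D i)" by blast
  then show ?case using Suc.IH[OF Suc.prems(1)] unfolding Ck_Suc_iff[of S n k f] by blast
qed

lemma Ck_le_mono: "good S n \<Longrightarrow> Ck_wrt S n k f \<Longrightarrow> j \<le> k \<Longrightarrow> Ck_wrt S n j f"
proof (induction k)
  case 0 then show ?case by simp
next
  case (Suc k)
  show ?case
  proof (cases "j = Suc k")
    case True then show ?thesis using Suc by simp
  next
    case False then show ?thesis using Suc Ck_Suc_mono[of S n k f] by simp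
  qed
qed

lemma sandwich0:
  assumes "\<forall>\<^sub>F y in F. 0 \<le> f y" "\<forall>\<^sub>F y in F. f y \<le> g y" "(g \<longlongrightarrow> 0) F"
  shows "(f \<longlongrightarrow> (0::real)) F"
  using tendsto_sandwich[OF assms(1,2) tendsto_const assms(3)] .

lemma div_norm_nonneg: "0 \<le> a \<Longrightarrow> 0 \<le> a / norm (y - x::real^'n)" by simp

lemma Ck_add:
  assumes g: "good S n"
  shows "Ck_wrt S n k f \<Longrightarrow> Ck_wrt S n k g \<Longrightarrow> Ck_wrt S n k (\<lambda>x. f x + g x)"
proof (induction k arbitrary: f g)
  case 0
  show ?case unfolding Ck_wrt.simps
  proof (intro conjI allI)
    fix x
    show "S (f x + g x)" using 0 goodD(2)[OF g] by simp
    show "((\<lambda>y. n (f y + g y - (f x + g x))) \<longlongrightarrow> 0) (at x)"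
    proof (rule sandwich0)
      have Sf: "\<And>y. S (f y)" "\<And>y. S (g y)" using 0 by auto
      show "\<forall>\<^sub>F y in at x. 0 \<le> n (f y + g y - (f x + g x))"
        using Sf by (auto intro!: always_eventually goodD(4)[OF g] good_diff[OF g] goodD(2)[OF g])
      have "n (f y + g y - (f x + g x)) \<le> n (f y - f x) + n (g y - g x)" for y
        using goodD(5)[OF g good_diff[OF g Sf(1) Sf(1)] good_diff[OF g Sf(2) Sf(2)], of y x y x]
        by (simp add: algebra_simps)
      then show "\<forall>\<^sub>F y in at x. n (f y + g y - (f x + g x)) \<le> n (f y - f x) + n (g y - g x)" by simp
      show "((\<lambda>y. n (f y - f x) + n (g y - g x)) \<longlongrightarrow> 0) (at x)"
        using tendsto_add[OF Ck_cont[OF g 0(1)] Ck_cont[OF g 0(2)]] by simp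
    qed
  qed
next
  case (Suc k)
  from Suc.prems(1)[unfolded Ck_Suc_iff] obtain Df where f: "\<forall>x. S (f x)" "\<forall>i x. S (Df i x)"
    "\<forall>x. ((\<lambda>y. n (rem f Df x y) / norm (y - x)) \<longlongrightarrow> 0) (at x)" "\<forall>i. Ck_wrt S n k (Df i)" by blast
  from Suc.prems(2)[unfolded Ck_Suc_iff] obtain Dg where gg: "\<forall>x. S (g x)" "\<forall>i x. S (Dg i x)"
    "\<forall>x. ((\<lambda>y. n (rem g Dg x y) / norm (y - x)) \<longlongrightarrow> 0) (at x)" "\<forall>i. Ck_wrt S n k (Dg i)" by blast
  show ?case unfolding Ck_Suc_iff
  proof (intro conjI exI[of _ "\<lambda>i x. Df i x + Dg i x"] allI)
    fix x
    show "S (f x + g x)" using f gg goodD(2)[OF g] by simp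
    fix i show "S (Df i x + Dg i x)" using f gg goodD(2)[OF g] by simp
  next
    fix i show "Ck_wrt S n k (\<lambda>x. Df i x + Dg i x)" using Suc.IH f(4) gg(4) by blast
  next
    fix x
    have eq: "rem (\<lambda>x. f x + g x) (\<lambda>i x. Df i x + Dg i x) x y = rem f Df x y + rem g Dg x y" for y
      by (simp only: rem_def scaleR_add_right sum.distrib) (simp add: algebra_simps del: vector_minus_component)
    have Sr: "S (rem f Df x y)" "S (rem g Dg x y)" for y
      using rem_S[of S n f y x Df] rem_S[of S n g y x Dg] f gg g by auto
    show "((\<lambda>y. n (rem (\<lambda>x. f x + g x) (\<lambda>i x. Df i x + Dg i x) x y) / norm (y - x)) \<longlongrightarrow> 0) (at x)"
    proof (rule sandwich0)
      show "\<forall>\<^sub>F y in at x. 0 \<le> n (rem (\<lambda>x. f x + g x) (\<lambda>i x. Df i x + Dg i x) x y) / norm (y - x)"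
        unfolding eq using Sr by (auto intro!: always_eventually div_norm_nonneg goodD(4)[OF g] goodD(2)[OF g])
      show "\<forall>\<^sub>F y in at x. n (rem (\<lambda>x. f x + g x) (\<lambda>i x. Df i x + Dg i x) x y) / norm (y - x)
             \<le> n (rem f Df x y) / norm (y - x) + n (rem g Dg x y) / norm (y - x)"
        unfolding eq using Sr goodD(5)[OF g Sr]
        by (auto intro!: always_eventually simp: add_divide_distrib[symmetric] divide_right_mono)
      show "((\<lambda>y. n (rem f Df x y) / norm (y - x) + n (rem g Dg x y) / norm (y - x)) \<longlongrightarrow> 0) (at x)"
        using tendsto_add[OF f(3)[rule_format, of x] gg(3)[rule_format, of x]] by simp
    qed
  qed
qed


definition slin :: "('u::real_vector \<Rightarrow> bool) \<Rightarrow> ('u \<Rightarrow> 'w::real_vector) \<Rightarrow> bool" where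
  "slin S T \<longleftrightarrow> (\<forall>u v. S u \<longrightarrow> S v \<longrightarrow> T (u + v) = T u + T v) \<and> (\<forall>r u. S u \<longrightarrow> T (r *\<^sub>R u) = r *\<^sub>R T u)"

lemma slin_add: "slin S T \<Longrightarrow> S u \<Longrightarrow> S v \<Longrightarrow> T (u + v) = T u + T v"
  unfolding slin_def by simp
lemma slin_scale: "slin S T \<Longrightarrow> S u \<Longrightarrow> T (r *\<^sub>R u) = r *\<^sub>R T u"
  unfolding slin_def by simp
lemma slin_neg: "slin S T \<Longrightarrow> S u \<Longrightarrow> T (- u) = - T u"
  using slin_scale[of S T u "-1"] by simp
lemma slin_diff: "good S n \<Longrightarrow> slin S T \<Longrightarrow> S u \<Longrightarrow> S v \<Longrightarrow> T (u - v) = T u - T v"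
  using slin_add[of S T u "- v"] slin_neg[of S T v] good_neg[of S n v] by simp
lemma slin_zero: "good S n \<Longrightarrow> slin S T \<Longrightarrow> T 0 = 0"
  using slin_scale[of S T 0 0] goodD(1)[of S n] by simp
lemma slin_sum:
  assumes "good S n" "slin S T"
  shows "finite A \<Longrightarrow> (\<And>i. i \<in> A \<Longrightarrow> S (f i)) \<Longrightarrow> T (\<Sum>i\<in>A. f i) = (\<Sum>i\<in>A. T (f i))"
proof (induction A rule: finite_induct)
  case empty then show ?case using slin_zero[OF assms] by simp
next
  case (insert x F)
  then show ?case using slin_add[OF assms(2), of "f x" "sum f F"] good_sum[OF assms(1) insert(1), of f] by simp
qed

lemma slin_rem:
  assumes g: "good S n" and T: "slin S T" and Sf: "\<And>x. S (f x)" and SD: "\<And>i x. S (D i x)"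
  shows "rem (\<lambda>x. T (f x)) (\<lambda>i x. T (D i x)) x y = T (rem f D x y)"
proof -
  have "T (\<Sum>i\<in>UNIV. ((y - x) $ i) *\<^sub>R D i x) = (\<Sum>i\<in>UNIV. T (((y - x) $ i) *\<^sub>R D i x))"
    by (rule slin_sum[OF g T]) (simp_all add: goodD(3)[OF g SD])
  also have "\<dots> = (\<Sum>i\<in>UNIV. ((y - x) $ i) *\<^sub>R T (D i x))"
    using slin_scale[OF T SD] by simp
  finally have L: "T (\<Sum>i\<in>UNIV. ((y - x) $ i) *\<^sub>R D i x) = (\<Sum>i\<in>UNIV. ((y - x) $ i) *\<^sub>R T (D i x))" .
  have "T (rem f D x y) = T (f y - f x) - T (\<Sum>i\<in>UNIV. ((y - x) $ i) *\<^sub>R D i x)"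
    unfolding rem_def by (rule slin_diff[OF g T good_diff[OF g Sf Sf] lin_part_S[of S n D x "y - x", OF g SD]])
  also have "\<dots> = T (f y) - T (f x) - (\<Sum>i\<in>UNIV. ((y - x) $ i) *\<^sub>R T (D i x))"
    unfolding L slin_diff[OF g T Sf Sf] ..
  finally show ?thesis unfolding rem_def by simp
qed

lemma Ck_lin:
  assumes g1: "good S1 n1" and g2: "good S2 n2" and T: "slin S1 T"
    and TS: "\<And>u. S1 u \<Longrightarrow> S2 (T u)" and Tb: "\<And>u. S1 u \<Longrightarrow> n2 (T u) \<le> K * n1 u"
  shows "Ck_wrt S1 n1 k f \<Longrightarrow> Ck_wrt S2 n2 k (\<lambda>x. T (f x))"
proof (induction k arbitrary: f)
  case 0
  have Sf: "\<And>y. S1 (f y)" using 0 by simp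
  show ?case unfolding Ck_wrt.simps
  proof (intro conjI allI)
    fix x
    show "S2 (T (f x))" using TS Sf by simp
    show "((\<lambda>y. n2 (T (f y) - T (f x))) \<longlongrightarrow> 0) (at x)"
    proof (rule sandwich0)
      show "\<forall>\<^sub>F y in at x. 0 \<le> n2 (T (f y) - T (f x))"
        using goodD(4)[OF g2 good_diff[OF g2 TS[OF Sf] TS[OF Sf]]] by simp
      show "\<forall>\<^sub>F y in at x. n2 (T (f y) - T (f x)) \<le> K * n1 (f y - f x)"
        using Tb[OF good_diff[OF g1 Sf Sf]] slin_diff[OF g1 T Sf Sf] by (intro always_eventually allI) simp
      show "((\<lambda>y. K * n1 (f y - f x)) \<longlongrightarrow> 0) (at x)"
        using tendsto_mult[OF tendsto_const Ck_cont[OF g1 0]] by simp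
    qed
  qed
next
  case (Suc k)
  from Suc.prems(1)[unfolded Ck_Suc_iff] obtain D where f: "\<forall>x. S1 (f x)" "\<forall>i x. S1 (D i x)"
    "\<forall>x. ((\<lambda>y. n1 (rem f D x y) / norm (y - x)) \<longlongrightarrow> 0) (at x)" "\<forall>i. Ck_wrt S1 n1 k (D i)" by blast
  show ?case unfolding Ck_Suc_iff
  proof (intro conjI exI[of _ "\<lambda>i x. T (D i x)"] allI)
    fix x
    show "S2 (T (f x))" using f TS by simp
    fix i show "S2 (T (D i x))" using f TS by simp
  next
    fix i show "Ck_wrt S2 n2 k (\<lambda>x. T (D i x))" using f(4) by (intro Suc.IH) simp
  next
    fix x
    have eq: "rem (\<lambda>x. T (f x)) (\<lambda>i x. T (D i x)) x y = T (rem f D x y)" for y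
      by (rule slin_rem[OF g1 T]) (use f in simp_all)
    have Sr: "S1 (rem f D x y)" for y
      using rem_S[of S1 n1 f y x D] f g1 by auto
    show "((\<lambda>y. n2 (rem (\<lambda>x. T (f x)) (\<lambda>i x. T (D i x)) x y) / norm (y - x)) \<longlongrightarrow> 0) (at x)"
    proof (rule sandwich0)
      show "\<forall>\<^sub>F y in at x. 0 \<le> n2 (rem (\<lambda>x. T (f x)) (\<lambda>i x. T (D i x)) x y) / norm (y - x)"
        unfolding eq using goodD(4)[OF g2 TS[OF Sr]] by (intro always_eventually allI div_norm_nonneg) simp
      show "\<forall>\<^sub>F y in at x. n2 (rem (\<lambda>x. T (f x)) (\<lambda>i x. T (D i x)) x y) / norm (y - x)
             \<le> K * (n1 (rem f D x y) / norm (y - x))"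
        unfolding eq using divide_right_mono[OF Tb[OF Sr] norm_ge_zero]
        by (intro always_eventually allI) simp
      show "((\<lambda>y. K * (n1 (rem f D x y) / norm (y - x))) \<longlongrightarrow> 0) (at x)"
        using tendsto_mult[OF tendsto_const f(3)[rule_format, of x]] by simp
    qed
  qed
qed


lemma bil_sum_l: "bilinear B \<Longrightarrow> B (\<Sum>i\<in>A. c i *\<^sub>R u i) v = (\<Sum>i\<in>A. c i *\<^sub>R B (u i) v)"
proof -
  assume B: "bilinear B"
  then have l: "linear (\<lambda>u. B u v)" by (simp add: bilinear_def)
  show ?thesis using linear_sum[OF l, of "\<lambda>i. c i *\<^sub>R u i" A] linear_scale[OF l] by simp
qed

lemma bil_sum_r: "bilinear B \<Longrightarrow> B v (\<Sum>i\<in>A. c i *\<^sub>R u i) = (\<Sum>i\<in>A. c i *\<^sub>R B v (u i))"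
proof -
  assume B: "bilinear B"
  then have l: "linear (\<lambda>u. B v u)" by (simp add: bilinear_def)
  show ?thesis using linear_sum[OF l, of "\<lambda>i. c i *\<^sub>R u i" A] linear_scale[OF l] by simp
qed

lemma bil_rem_eq:
  assumes B: "bilinear B"
  shows "B fy gy - B fx gx - (\<Sum>i\<in>A. c i *\<^sub>R (B (Df i) gx + B fx (Dg i)))
    = B (fy - fx - (\<Sum>i\<in>A. c i *\<^sub>R Df i)) gy + B (\<Sum>i\<in>A. c i *\<^sub>R Df i) (gy - gx)
      + B fx (gy - gx - (\<Sum>i\<in>A. c i *\<^sub>R Dg i))"
proof -
  have "(\<Sum>i\<in>A. c i *\<^sub>R (B (Df i) gx + B fx (Dg i))) = B (\<Sum>i\<in>A. c i *\<^sub>R Df i) gx + B fx (\<Sum>i\<in>A. c i *\<^sub>R Dg i)"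
    by (simp add: scaleR_add_right sum.distrib bil_sum_l[OF B] bil_sum_r[OF B])
  then show ?thesis by (simp add: bilinear_lsub[OF B] bilinear_rsub[OF B] bilinear_ladd[OF B] bilinear_radd[OF B] algebra_simps)
qed

lemma bil_rem:
  assumes B: "bilinear B"
  shows "rem (\<lambda>x. B (f x) (g x)) (\<lambda>i x. B (Df i x) (g x) + B (f x) (Dg i x)) x y
    = B (rem f Df x y) (g y) + B (\<Sum>i\<in>UNIV. ((y - x) $ i) *\<^sub>R Df i x) (g y - g x) + B (f x) (rem g Dg x y)"
  unfolding rem_def by (rule bil_rem_eq[OF B])

lemma Ck_bil:
  assumes g1: "good S1 n1" and g2: "good S2 n2" and g3: "good S3 n3" and B: "bilinear B"
    and BS: "\<And>u v. S1 u \<Longrightarrow> S2 v \<Longrightarrow> S3 (B u v)"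
    and Bb: "\<And>u v. S1 u \<Longrightarrow> S2 v \<Longrightarrow> n3 (B u v) \<le> K * n1 u * n2 v" and K: "0 \<le> K"
  shows "Ck_wrt S1 n1 k f \<Longrightarrow> Ck_wrt S2 n2 k g \<Longrightarrow> Ck_wrt S3 n3 k (\<lambda>x. B (f x) (g x))"
proof (induction k arbitrary: f g)
  case 0
  have Sf: "\<And>y. S1 (f y)" and Sg: "\<And>y. S2 (g y)" using 0 by auto
  show ?case unfolding Ck_wrt.simps
  proof (intro conjI allI)
    fix x
    show "S3 (B (f x) (g x))" using BS Sf Sg by simp
    have Sdf: "S1 (f y - f x)" and Sdg: "S2 (g y - g x)" for y
      using good_diff[OF g1 Sf Sf] good_diff[OF g2 Sg Sg] by auto
    show "((\<lambda>y. n3 (B (f y) (g y) - B (f x) (g x))) \<longlongrightarrow> 0) (at x)"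
    proof (rule sandwich0)
      show "\<forall>\<^sub>F y in at x. 0 \<le> n3 (B (f y) (g y) - B (f x) (g x))"
        using goodD(4)[OF g3 good_diff[OF g3 BS[OF Sf Sg] BS[OF Sf Sg]]] by simp
      have "n3 (B (f y) (g y) - B (f x) (g x)) \<le> K * n1 (f y - f x) * (n2 (g x) + n2 (g y - g x)) + K * n1 (f x) * n2 (g y - g x)" for y
      proof -
        have eq: "B (f y) (g y) - B (f x) (g x) = B (f y - f x) (g y) + B (f x) (g y - g x)"
          by (simp add: bilinear_lsub[OF B] bilinear_rsub[OF B])
        have "n3 (B (f y - f x) (g y) + B (f x) (g y - g x)) \<le> n3 (B (f y - f x) (g y)) + n3 (B (f x) (g y - g x))"
          by (rule goodD(5)[OF g3 BS[OF Sdf Sg] BS[OF Sf Sdg]])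
        also have "\<dots> \<le> K * n1 (f y - f x) * n2 (g y) + K * n1 (f x) * n2 (g y - g x)"
          by (intro add_mono Bb Sdf Sg Sf Sdg)
        also have "\<dots> \<le> K * n1 (f y - f x) * (n2 (g x) + n2 (g y - g x)) + K * n1 (f x) * n2 (g y - g x)"
        proof -
          have "n2 (g y) \<le> n2 (g x) + n2 (g y - g x)"
            using goodD(5)[OF g2 Sg Sdg, of x y] by simp
          moreover have "0 \<le> K * n1 (f y - f x)" using K goodD(4)[OF g1 Sdf] by simp
          ultimately show ?thesis by (simp add: mult_left_mono)
        qed
        finally show ?thesis unfolding eq .
      qed
      then show "\<forall>\<^sub>F y in at x. n3 (B (f y) (g y) - B (f x) (g x)) \<le> K * n1 (f y - f x) * (n2 (g x) + n2 (g y - g x)) + K * n1 (f x) * n2 (g y - g x)"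
        by simp
      have "((\<lambda>y. K * n1 (f y - f x) * (n2 (g x) + n2 (g y - g x)) + K * n1 (f x) * n2 (g y - g x)) \<longlongrightarrow>
              K * 0 * (n2 (g x) + 0) + K * n1 (f x) * 0) (at x)"
        by (intro tendsto_intros Ck_cont[OF g1 0(1)] Ck_cont[OF g2 0(2)])
      then show "((\<lambda>y. K * n1 (f y - f x) * (n2 (g x) + n2 (g y - g x)) + K * n1 (f x) * n2 (g y - g x)) \<longlongrightarrow> 0) (at x)"
        by simp
    qed
  qed
next
  case (Suc k)
  from Suc.prems(1)[unfolded Ck_Suc_iff] obtain Df where f: "\<forall>x. S1 (f x)" "\<forall>i x. S1 (Df i x)"
    "\<forall>x. ((\<lambda>y. n1 (rem f Df x y) / norm (y - x)) \<longlongrightarrow> 0) (at x)" "\<forall>i. Ck_wrt S1 n1 k (Df i)" by blast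
  from Suc.prems(2)[unfolded Ck_Suc_iff] obtain Dg where gg: "\<forall>x. S2 (g x)" "\<forall>i x. S2 (Dg i x)"
    "\<forall>x. ((\<lambda>y. n2 (rem g Dg x y) / norm (y - x)) \<longlongrightarrow> 0) (at x)" "\<forall>i. Ck_wrt S2 n2 k (Dg i)" by blast
  have fk: "Ck_wrt S1 n1 k f" by (rule Ck_Suc_mono[OF g1 Suc.prems(1)])
  have gk: "Ck_wrt S2 n2 k g" by (rule Ck_Suc_mono[OF g2 Suc.prems(2)])
  have Sf: "\<And>y. S1 (f y)" "\<And>i y. S1 (Df i y)" and Sg: "\<And>y. S2 (g y)" "\<And>i y. S2 (Dg i y)"
    using f gg by auto
  show ?case unfolding Ck_Suc_iff
  proof (intro conjI exI[of _ "\<lambda>i x. B (Df i x) (g x) + B (f x) (Dg i x)"] allI)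
    fix x
    show "S3 (B (f x) (g x))" using BS Sf Sg by simp
    fix i show "S3 (B (Df i x) (g x) + B (f x) (Dg i x))" using goodD(2)[OF g3 BS[OF Sf(2) Sg(1)] BS[OF Sf(1) Sg(2)]] by simp
  next
    fix i show "Ck_wrt S3 n3 k (\<lambda>x. B (Df i x) (g x) + B (f x) (Dg i x))"
      by (rule Ck_add[OF g3, of k "\<lambda>x. B (Df i x) (g x)" "\<lambda>x. B (f x) (Dg i x)"])
        (intro Suc.IH, use f gk gg fk in simp_all)+
  next
    fix x
    define C1 where "C1 = (\<Sum>i\<in>UNIV. n1 (Df i x))"
    have Sr: "S1 (rem f Df x y)" "S2 (rem g Dg x y)" for y
      using rem_S[of S1 n1 f y x Df] rem_S[of S2 n2 g y x Dg] f gg g1 g2 by auto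
    have SL: "S1 (\<Sum>i\<in>UNIV. ((y - x) $ i) *\<^sub>R Df i x)" for y
      by (rule lin_part_S[of S1 n1 Df x "y - x", OF g1 Sf(2)])
    have Sdg: "S2 (g y - g x)" for y using good_diff[OF g2 Sg(1) Sg(1)] .
    let ?R = "\<lambda>y. rem (\<lambda>x. B (f x) (g x)) (\<lambda>i x. B (Df i x) (g x) + B (f x) (Dg i x)) x y"
    let ?U = "\<lambda>y. K * (n1 (rem f Df x y) / norm (y - x)) * (n2 (g x) + n2 (g y - g x)) + K * C1 * n2 (g y - g x)
               + K * n1 (f x) * (n2 (rem g Dg x y) / norm (y - x))"
    have SR: "S3 (?R y)" for y
      unfolding bil_rem[OF B]
      by (intro goodD(2)[OF g3] BS Sr SL Sdg Sf Sg)
    show "((\<lambda>y. n3 (?R y) / norm (y - x)) \<longlongrightarrow> 0) (at x)"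
    proof (rule sandwich0)
      show "\<forall>\<^sub>F y in at x. 0 \<le> n3 (?R y) / norm (y - x)"
        using goodD(4)[OF g3 SR] by (intro always_eventually allI div_norm_nonneg) simp
      have "n3 (?R y) / norm (y - x) \<le> ?U y" if yx: "y \<noteq> x" for y
      proof -
        have np: "0 < norm (y - x)" using yx by simp
        have "n3 (?R y) \<le> n3 (B (rem f Df x y) (g y)) + n3 (B (\<Sum>i\<in>UNIV. ((y - x) $ i) *\<^sub>R Df i x) (g y - g x)) + n3 (B (f x) (rem g Dg x y))"
          unfolding bil_rem[OF B]
          by (rule order_trans[OF goodD(5)[OF g3 goodD(2)[OF g3 BS[OF Sr(1) Sg(1)] BS[OF SL Sdg]] BS[OF Sf(1) Sr(2)]]])
            (intro add_mono order_refl goodD(5)[OF g3 BS[OF Sr(1) Sg(1)] BS[OF SL Sdg]])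
        also have "\<dots> \<le> K * n1 (rem f Df x y) * n2 (g y) + K * (norm (y - x) * C1) * n2 (g y - g x) + K * n1 (f x) * n2 (rem g Dg x y)"
        proof (intro add_mono)
          show "n3 (B (rem f Df x y) (g y)) \<le> K * n1 (rem f Df x y) * n2 (g y)" by (intro Bb Sr Sg)
          show "n3 (B (f x) (rem g Dg x y)) \<le> K * n1 (f x) * n2 (rem g Dg x y)" by (intro Bb Sr Sf)
          have "n3 (B (\<Sum>i\<in>UNIV. ((y - x) $ i) *\<^sub>R Df i x) (g y - g x)) \<le> K * n1 (\<Sum>i\<in>UNIV. ((y - x) $ i) *\<^sub>R Df i x) * n2 (g y - g x)"
            by (intro Bb SL Sdg)
          also have "\<dots> \<le> K * (norm (y - x) * C1) * n2 (g y - g x)"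
            unfolding C1_def
            by (intro mult_right_mono mult_left_mono lin_part_bound[OF g1] K goodD(4)[OF g2 Sdg] Sf)
          finally show "n3 (B (\<Sum>i\<in>UNIV. ((y - x) $ i) *\<^sub>R Df i x) (g y - g x)) \<le> K * (norm (y - x) * C1) * n2 (g y - g x)" .
        qed
        also have "\<dots> \<le> K * n1 (rem f Df x y) * (n2 (g x) + n2 (g y - g x)) + K * (norm (y - x) * C1) * n2 (g y - g x) + K * n1 (f x) * n2 (rem g Dg x y)"
        proof -
          have "n2 (g y) \<le> n2 (g x) + n2 (g y - g x)"
            using goodD(5)[OF g2 Sg(1) Sdg, of x y] by simp
          moreover have "0 \<le> K * n1 (rem f Df x y)" using K goodD(4)[OF g1 Sr(1)] by simp
          ultimately show ?thesis by (simp add: mult_left_mono)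
        qed
        finally have ineq: "n3 (?R y) \<le> K * n1 (rem f Df x y) * (n2 (g x) + n2 (g y - g x)) + K * (norm (y - x) * C1) * n2 (g y - g x) + K * n1 (f x) * n2 (rem g Dg x y)" .
        have "n3 (?R y) / norm (y - x) \<le> (K * n1 (rem f Df x y) * (n2 (g x) + n2 (g y - g x)) + K * (norm (y - x) * C1) * n2 (g y - g x) + K * n1 (f x) * n2 (rem g Dg x y)) / norm (y - x)"
          by (rule divide_right_mono[OF ineq norm_ge_zero])
        also have "\<dots> = ?U y" using np by (simp add: field_simps)
        finally show ?thesis .
      qed
      then show "\<forall>\<^sub>F y in at x. n3 (?R y) / norm (y - x) \<le> ?U y"
        by (auto simp: eventually_at_filter)
      have "(?U \<longlongrightarrow> K * 0 * (n2 (g x) + 0) + K * C1 * 0 + K * n1 (f x) * 0) (at x)"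
        by (intro tendsto_intros Ck_cont[OF g2 Suc.prems(2)] f(3)[rule_format] gg(3)[rule_format])
      then show "(?U \<longlongrightarrow> 0) (at x)" by simp
    qed
  qed
qed

lemma sum_fun_app: "(\<Sum>i\<in>A. F i) (a::'a) = (\<Sum>i\<in>A. (F i a :: 'b::comm_monoid_add))"
  by (induction A rule: infinite_finite_induct) (simp_all add: plus_fun_def zero_fun_def)

lemma scaleR_fun_app: "(r *\<^sub>R f) a = r *\<^sub>R f a"
  by (simp add: scaleR_fun_def)

lemma rem_app: "rem f D x y a = f y a - f x a - (\<Sum>i\<in>UNIV. ((y - x) $ i) * D i x a)"
  by (simp add: rem_def sum_fun_app scaleR_fun_app fun_diff_def del: vector_minus_component)

definition nC :: "real \<Rightarrow> (real \<Rightarrow> real) \<Rightarrow> real" where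
  "nC a2 v = (SUP a\<in>{0..a2}. \<bar>v a\<bar>)"

definition SC :: "real \<Rightarrow> (real \<Rightarrow> real) \<Rightarrow> bool" where
  "SC a2 v \<longleftrightarrow> continuous_on {0..a2} v"

lemma nC_ge: "SC a2 v \<Longrightarrow> a \<in> {0..a2} \<Longrightarrow> \<bar>v a\<bar> \<le> nC a2 v"
  unfolding nC_def SC_def
proof (rule cSUP_upper)
  assume "continuous_on {0..a2} v"
  then have "compact ((\<lambda>a. \<bar>v a\<bar>) ` {0..a2})"
    by (intro compact_continuous_image continuous_intros) auto
  then show "bdd_above ((\<lambda>a. \<bar>v a\<bar>) ` {0..a2})"
    by (intro bounded_imp_bdd_above compact_imp_bounded)
qed

lemma nC_le: "0 \<le> a2 \<Longrightarrow> (\<And>a. a \<in> {0..a2} \<Longrightarrow> \<bar>v a\<bar> \<le> c) \<Longrightarrow> nC a2 v \<le> c"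
  unfolding nC_def by (rule cSUP_least) auto

lemma nC_nonneg: "0 \<le> a2 \<Longrightarrow> SC a2 v \<Longrightarrow> 0 \<le> nC a2 v"
  using nC_ge[of a2 v 0] by force

lemma good_C: assumes "0 \<le> a2" shows "good (SC a2) (nC a2)"
  unfolding good_def
proof (intro conjI allI impI)
  show "SC a2 0" by (simp add: SC_def zero_fun_def)
  fix u v assume u: "SC a2 u" and v: "SC a2 v"
  show "SC a2 (u + v)" using u v by (simp add: SC_def plus_fun_def continuous_on_add)
  show "nC a2 (u + v) \<le> nC a2 u + nC a2 v"
    using nC_ge[OF u] nC_ge[OF v] assms
    by (intro nC_le) (auto simp: plus_fun_def intro: order_trans[OF abs_triangle_ineq add_mono])
next
  fix r u assume u: "SC a2 u"
  show "SC a2 (r *\<^sub>R u)" using u unfolding SC_def scaleR_fun_def by (auto intro!: continuous_intros)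
  show "nC a2 (r *\<^sub>R u) \<le> \<bar>r\<bar> * nC a2 u"
    using nC_ge[OF u] assms
    by (intro nC_le) (auto simp: scaleR_fun_def abs_mult intro: mult_left_mono)
next
  fix u assume "SC a2 u" then show "0 \<le> nC a2 u" using nC_nonneg assms by blast
qed

lemma good_R: "good (\<lambda>_. True) (abs :: real \<Rightarrow> real)"
  unfolding good_def by (auto simp: abs_mult)

definition pmul :: "(real \<Rightarrow> real) \<Rightarrow> (real \<Rightarrow> real) \<Rightarrow> real \<Rightarrow> real" where
  "pmul u v = (\<lambda>a. u a * v a)"

lemma bilinear_pmul: "bilinear pmul"
  unfolding bilinear_def pmul_def
  by (auto simp: linear_iff plus_fun_def scaleR_fun_def algebra_simps)

lemma SC_pmul: "SC a2 u \<Longrightarrow> SC a2 v \<Longrightarrow> SC a2 (pmul u v)"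
  unfolding SC_def pmul_def by (intro continuous_intros)

lemma nC_pmul: "0 \<le> a2 \<Longrightarrow> SC a2 u \<Longrightarrow> SC a2 v \<Longrightarrow> nC a2 (pmul u v) \<le> 1 * nC a2 u * nC a2 v"
  unfolding pmul_def
  by (intro nC_le) (auto simp: abs_mult intro!: mult_mono nC_ge nC_nonneg)

lemma Ck_pmul: assumes "0 \<le> a2" "Ck_wrt (SC a2) (nC a2) k f" "Ck_wrt (SC a2) (nC a2) k g" shows
   "Ck_wrt (SC a2) (nC a2) k (\<lambda>x. pmul (f x) (g x))"
  using Ck_bil[of "SC a2" "nC a2" "SC a2" "nC a2" "SC a2" "nC a2" pmul 1 k f g]
    good_C[OF assms(1)] bilinear_pmul SC_pmul nC_pmul[OF assms(1)] assms(2,3) by simp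

lemma bilinear_rmul: "bilinear (\<lambda>u v::real. u * v)"
  by (rule bilinear_times)

lemma Ck_rmul: assumes "Ck_wrt (\<lambda>_. True) abs k f" "Ck_wrt (\<lambda>_. True) abs k g" shows
   "Ck_wrt (\<lambda>_. True) abs k (\<lambda>x. f x * g x :: real)"
  by (rule Ck_bil[OF good_R good_R good_R bilinear_rmul, of 1]) (simp_all add: abs_mult assms)


lemma CR_nrm_eq: "CR_nrm a2 p = max (nC a2 (fst p)) \<bar>snd p\<bar>"
  by (simp add: CR_nrm_def nC_def)
lemma CR_mem_eq: "CR_mem a2 p = SC a2 (fst p)"
  by (simp add: CR_mem_def SC_def)

lemma rem_pair: "rem (\<lambda>x. (f x, g x)) (\<lambda>i x. (Df i x, Dg i x)) x y = (rem f Df x y, rem g Dg x y)"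
  by (simp add: rem_def prod_eq_iff fst_sum snd_sum del: vector_minus_component)

lemma Ck_pair:
  assumes a2: "0 \<le> a2"
  shows "Ck_wrt (SC a2) (nC a2) k f \<Longrightarrow> Ck_wrt (\<lambda>_. True) abs k g \<Longrightarrow> Ck_wrt (CR_mem a2) (CR_nrm a2) k (\<lambda>x. (f x, g x))"
proof (induction k arbitrary: f g)
  case 0
  have Sf: "\<And>y. SC a2 (f y)" using 0 by auto
  show ?case unfolding Ck_wrt.simps CR_mem_eq CR_nrm_eq
  proof (intro conjI allI)
    fix x
    show "SC a2 (fst (f x, g x))" using Sf by simp
    show "((\<lambda>y. max (nC a2 (fst ((f y, g y) - (f x, g x)))) \<bar>snd ((f y, g y) - (f x, g x))\<bar>) \<longlongrightarrow> 0) (at x)"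
    proof (rule sandwich0)
      show "\<forall>\<^sub>F y in at x. 0 \<le> max (nC a2 (fst ((f y, g y) - (f x, g x)))) \<bar>snd ((f y, g y) - (f x, g x))\<bar>"
        by (intro always_eventually allI) (simp add: le_max_iff_disj)
      have "0 \<le> nC a2 (f y - f x)" for y using nC_nonneg[OF a2 good_diff[of "SC a2" "nC a2" "f y" "f x", OF good_C[OF a2] Sf[of y] Sf[of x]]] .
      then show "\<forall>\<^sub>F y in at x. max (nC a2 (fst ((f y, g y) - (f x, g x)))) \<bar>snd ((f y, g y) - (f x, g x))\<bar> \<le> nC a2 (f y - f x) + \<bar>g y - g x\<bar>"
        by (intro always_eventually allI) simp
      show "((\<lambda>y. nC a2 (f y - f x) + \<bar>g y - g x\<bar>) \<longlongrightarrow> 0) (at x)"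
        by (rule tendsto_eq_rhs[OF tendsto_add[OF Ck_cont[OF good_C[OF a2] 0(1)] Ck_cont[OF good_R 0(2)]]]) simp
    qed
  qed
next
  case (Suc k)
  from Suc.prems(1)[unfolded Ck_Suc_iff] obtain Df where f: "\<forall>x. SC a2 (f x)" "\<forall>i x. SC a2 (Df i x)"
    "\<forall>x. ((\<lambda>y. nC a2 (rem f Df x y) / norm (y - x)) \<longlongrightarrow> 0) (at x)" "\<forall>i. Ck_wrt (SC a2) (nC a2) k (Df i)" by blast
  from Suc.prems(2)[unfolded Ck_Suc_iff] obtain Dg where gg:
    "\<forall>x. ((\<lambda>y. \<bar>rem g Dg x y\<bar> / norm (y - x)) \<longlongrightarrow> 0) (at x)" "\<forall>i. Ck_wrt (\<lambda>_. True) abs k (Dg i)" by blast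
  show ?case unfolding Ck_Suc_iff
  proof (intro conjI exI[of _ "\<lambda>i x. (Df i x, Dg i x)"] allI)
    fix x
    show "CR_mem a2 (f x, g x)" using f by (simp add: CR_mem_eq)
    fix i show "CR_mem a2 (Df i x, Dg i x)" using f by (simp add: CR_mem_eq)
  next
    fix i show "Ck_wrt (CR_mem a2) (CR_nrm a2) k (\<lambda>x. (Df i x, Dg i x))"
      using f(4) gg(2) by (intro Suc.IH) simp_all
  next
    fix x
    have Sr: "SC a2 (rem f Df x y)" for y
      using rem_S[of "SC a2" "nC a2" f y x Df] f good_C[OF a2] by auto
    show "((\<lambda>y. CR_nrm a2 (rem (\<lambda>x. (f x, g x)) (\<lambda>i x. (Df i x, Dg i x)) x y) / norm (y - x)) \<longlongrightarrow> 0) (at x)"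
      unfolding rem_pair CR_nrm_eq
    proof (rule sandwich0)
      show "\<forall>\<^sub>F y in at x. 0 \<le> max (nC a2 (fst (rem f Df x y, rem g Dg x y))) \<bar>snd (rem f Df x y, rem g Dg x y)\<bar> / norm (y - x)"
        by simp
      show "\<forall>\<^sub>F y in at x. max (nC a2 (fst (rem f Df x y, rem g Dg x y))) \<bar>snd (rem f Df x y, rem g Dg x y)\<bar> / norm (y - x)
          \<le> nC a2 (rem f Df x y) / norm (y - x) + \<bar>rem g Dg x y\<bar> / norm (y - x)"
        using nC_nonneg[OF a2 Sr]
        by (intro always_eventually allI) (simp add: add_divide_distrib[symmetric] divide_right_mono)
      show "((\<lambda>y. nC a2 (rem f Df x y) / norm (y - x) + \<bar>rem g Dg x y\<bar> / norm (y - x)) \<longlongrightarrow> 0) (at x)"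
        by (rule tendsto_eq_rhs[OF tendsto_add[OF f(3)[rule_format, of x] gg(1)[rule_format, of x]]]) simp
    qed
  qed
qed


lemma blin_sum_comp: "bounded_linear (\<lambda>h::real^'n. \<Sum>i\<in>UNIV. h $ i * c i)"
  by (intro bounded_linear_sum bounded_linear_mult_left[THEN bounded_linear_compose] bounded_linear_vec_nth)

lemma hasD_real_iff:
  fixes g :: "real^'n \<Rightarrow> real"
  shows "((\<lambda>y. \<bar>rem g D x y\<bar> / norm (y - x)) \<longlongrightarrow> 0) (at x) \<longleftrightarrow>
    (g has_derivative (\<lambda>h. \<Sum>i\<in>UNIV. h $ i * D i x)) (at x)"
proof -
  have eq: "(\<lambda>y. \<bar>rem g D x y\<bar> / norm (y - x)) = (\<lambda>y. \<bar>((g y - g x) - (\<Sum>i\<in>UNIV. (y - x) $ i * D i x)) /\<^sub>R norm (y - x)\<bar>)"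
    by (rule ext) (simp add: rem_def divide_inverse abs_mult mult.commute del: vector_minus_component)
  show ?thesis
    unfolding has_derivative_at_within[of g _ x UNIV] eq tendsto_rabs_zero_iff
    using blin_sum_comp[of "\<lambda>i. D i x"] by simp
qed

lemma slin_uminus: "slin (\<lambda>_. True) (\<lambda>u::real. - u)"
  unfolding slin_def by simp

lemma Ck_uminus: "Ck_wrt (\<lambda>_. True) abs k f \<Longrightarrow> Ck_wrt (\<lambda>_. True) abs k (\<lambda>x. - f x :: real)"
  by (rule Ck_lin[OF good_R good_R slin_uminus, of 1]) simp_all

lemma Ck_inv:
  shows "Ck_wrt (\<lambda>_. True) abs k g \<Longrightarrow> (\<forall>x. g x \<noteq> 0) \<Longrightarrow> Ck_wrt (\<lambda>_. True) abs k (\<lambda>x. inverse (g x) :: real)"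
proof (induction k arbitrary: g)
  case 0
  show ?case unfolding Ck_wrt.simps
  proof (intro conjI allI)
    fix x
    show "True" by simp
    have "((\<lambda>y. \<bar>g y - g x\<bar>) \<longlongrightarrow> 0) (at x)" using 0 by simp
    then have "(g \<longlongrightarrow> g x) (at x)" by (rule LIM_zero_cancel[OF tendsto_rabs_zero_cancel])
    then have "((\<lambda>y. inverse (g y)) \<longlongrightarrow> inverse (g x)) (at x)" using 0 by (intro tendsto_inverse) auto
    then show "((\<lambda>y. \<bar>inverse (g y) - inverse (g x)\<bar>) \<longlongrightarrow> 0) (at x)"
      by (intro tendsto_rabs_zero LIM_zero)
  qed
next
  case (Suc k)
  from Suc.prems(1)[unfolded Ck_Suc_iff] obtain Dg where gg:
    "\<forall>x. ((\<lambda>y. \<bar>rem g Dg x y\<bar> / norm (y - x)) \<longlongrightarrow> 0) (at x)" "\<forall>i. Ck_wrt (\<lambda>_. True) abs k (Dg i)" by blast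
  have gk: "Ck_wrt (\<lambda>_. True) abs k g" by (rule Ck_Suc_mono[OF good_R Suc.prems(1)])
  have ik: "Ck_wrt (\<lambda>_. True) abs k (\<lambda>x. inverse (g x))" using Suc.IH[OF gk] Suc.prems(2) .
  show ?case unfolding Ck_Suc_iff
  proof (intro conjI exI[of _ "\<lambda>i x. - (Dg i x * (inverse (g x) * inverse (g x)))"] allI)
    fix i show "Ck_wrt (\<lambda>_. True) abs k (\<lambda>x. - (Dg i x * (inverse (g x) * inverse (g x))))"
      by (rule Ck_uminus, rule Ck_rmul, rule gg(2)[rule_format], rule Ck_rmul, rule ik, rule ik)
  next
    fix x
    have d: "(g has_derivative (\<lambda>h. \<Sum>i\<in>UNIV. h $ i * Dg i x)) (at x)"
      using gg(1) hasD_real_iff by blast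
    have "((\<lambda>x. inverse (g x)) has_derivative (\<lambda>h. - (inverse (g x) * (\<Sum>i\<in>UNIV. h $ i * Dg i x) * inverse (g x)))) (at x)"
      by (rule Deriv.has_derivative_inverse[OF _ d]) (use Suc.prems(2) in simp)
    moreover have "(\<lambda>h. - (inverse (g x) * (\<Sum>i\<in>UNIV. h $ i * Dg i x) * inverse (g x))) =
        (\<lambda>h. \<Sum>i\<in>UNIV. h $ i * (- (Dg i x * (inverse (g x) * inverse (g x)))))"
    proof
      fix h :: "real^'a"
      show "- (inverse (g x) * (\<Sum>i\<in>UNIV. h $ i * Dg i x) * inverse (g x)) = (\<Sum>i\<in>UNIV. h $ i * (- (Dg i x * (inverse (g x) * inverse (g x)))))"
        by (simp add: sum_distrib_right sum_distrib_left sum_negf mult_ac)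
    qed
    ultimately show "((\<lambda>y. \<bar>rem (\<lambda>x. inverse (g x)) (\<lambda>i x. - (Dg i x * (inverse (g x) * inverse (g x)))) x y\<bar> / norm (y - x)) \<longlongrightarrow> 0) (at x)"
      unfolding hasD_real_iff by simp
  qed simp_all
qed

lemma exp_sub1: "\<bar>exp (d::real) - 1\<bar> \<le> \<bar>d\<bar> * exp \<bar>d\<bar>"
proof -
  obtain t where t: "\<bar>t\<bar> \<le> \<bar>d\<bar>" "exp d = (\<Sum>m<1. d ^ m / fact m) + exp t / fact 1 * d ^ 1"
    using Maclaurin_exp_le[of d 1] by blast
  then have "exp d - 1 = exp t * d" by simp
  then have "\<bar>exp d - 1\<bar> = exp t * \<bar>d\<bar>" by (simp add: abs_mult)
  also have "\<dots> \<le> exp \<bar>d\<bar> * \<bar>d\<bar>" using t(1) by (intro mult_right_mono) auto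
  finally show ?thesis by (simp add: mult.commute)
qed

lemma exp_sub2: "\<bar>exp (d::real) - 1 - d\<bar> \<le> d\<^sup>2 * exp \<bar>d\<bar>"
proof -
  obtain t where t: "\<bar>t\<bar> \<le> \<bar>d\<bar>" "exp d = (\<Sum>m<2. d ^ m / fact m) + exp t / fact 2 * d ^ 2"
    using Maclaurin_exp_le[of d 2] by blast
  then have e: "exp d - 1 - d = exp t / 2 * d\<^sup>2" by (simp add: eval_nat_numeral)
  have "\<bar>exp d - 1 - d\<bar> = exp t / 2 * d\<^sup>2" unfolding e by (rule abs_of_nonneg) simp
  also have "\<dots> \<le> exp \<bar>d\<bar> * d\<^sup>2"
  proof (intro mult_right_mono)
    have "exp t \<le> exp \<bar>d\<bar>" using t(1) by (auto intro: order_trans[OF abs_ge_self])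
    then show "exp t / 2 \<le> exp \<bar>d\<bar>" using exp_gt_zero[of t] by linarith
  qed simp
  finally show ?thesis by (simp add: mult.commute)
qed

lemma exp_diff_bound: "\<bar>exp (b'::real) - exp b\<bar> \<le> exp \<bar>b\<bar> * (\<bar>b' - b\<bar> * exp \<bar>b' - b\<bar>)"
proof -
  have "exp b' - exp b = exp b * (exp (b' - b) - 1)" by (simp add: exp_diff algebra_simps)
  then have "\<bar>exp b' - exp b\<bar> = exp b * \<bar>exp (b' - b) - 1\<bar>" by (simp add: abs_mult)
  also have "\<dots> \<le> exp \<bar>b\<bar> * (\<bar>b' - b\<bar> * exp \<bar>b' - b\<bar>)"
    by (intro mult_mono exp_sub1) auto
  finally show ?thesis .
qed

definition expf :: "(real \<Rightarrow> real) \<Rightarrow> real \<Rightarrow> real" where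
  "expf v = (\<lambda>a. exp (v a))"

lemma SC_expf: "SC a2 v \<Longrightarrow> SC a2 (expf v)"
  unfolding SC_def expf_def by (intro continuous_intros)

lemma Ck_expf:
  assumes a2: "0 \<le> a2"
  shows "Ck_wrt (SC a2) (nC a2) k h \<Longrightarrow> Ck_wrt (SC a2) (nC a2) k (\<lambda>x. expf (h x))"
proof (induction k arbitrary: h)
  case 0
  have Sh: "\<And>y. SC a2 (h y)" using 0 by auto
  show ?case unfolding Ck_wrt.simps
  proof (intro conjI allI)
    fix x
    show "SC a2 (expf (h x))" using SC_expf Sh by blast
    have Sd: "SC a2 (h y - h x)" for y using good_diff[of "SC a2" "nC a2" "h y" "h x", OF good_C[OF a2] Sh Sh] .
    define M where "M = nC a2 (h x)"
    show "((\<lambda>y. nC a2 (expf (h y) - expf (h x))) \<longlongrightarrow> 0) (at x)"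
    proof (rule sandwich0)
      show "\<forall>\<^sub>F y in at x. 0 \<le> nC a2 (expf (h y) - expf (h x))"
        using nC_nonneg[OF a2 good_diff[of "SC a2" "nC a2", OF good_C[OF a2] SC_expf[OF Sh] SC_expf[OF Sh]]]
        by (intro always_eventually allI) blast
      have "nC a2 (expf (h y) - expf (h x)) \<le> exp M * (nC a2 (h y - h x) * exp (nC a2 (h y - h x)))" for y
      proof (rule nC_le[OF a2])
        fix a assume a: "a \<in> {0..a2}"
        have "\<bar>(expf (h y) - expf (h x)) a\<bar> = \<bar>exp (h y a) - exp (h x a)\<bar>" by (simp add: expf_def)
        also have "\<dots> \<le> exp \<bar>h x a\<bar> * (\<bar>h y a - h x a\<bar> * exp \<bar>h y a - h x a\<bar>)" by (rule exp_diff_bound)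
        also have "\<dots> \<le> exp M * (nC a2 (h y - h x) * exp (nC a2 (h y - h x)))"
        proof -
          have 1: "\<bar>h x a\<bar> \<le> M" unfolding M_def by (rule nC_ge[OF Sh a])
          have 2: "\<bar>h y a - h x a\<bar> \<le> nC a2 (h y - h x)" using nC_ge[OF Sd a, of y] by simp
          show ?thesis using 1 2 by (intro mult_mono) auto
        qed
        finally show "\<bar>(expf (h y) - expf (h x)) a\<bar> \<le> exp M * (nC a2 (h y - h x) * exp (nC a2 (h y - h x)))" .
      qed
      then show "\<forall>\<^sub>F y in at x. nC a2 (expf (h y) - expf (h x)) \<le> exp M * (nC a2 (h y - h x) * exp (nC a2 (h y - h x)))"
        by simp
      have "((\<lambda>y. exp M * (nC a2 (h y - h x) * exp (nC a2 (h y - h x)))) \<longlongrightarrow> exp M * (0 * exp 0)) (at x)"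
        by (intro tendsto_intros Ck_cont[OF good_C[OF a2] 0])
      then show "((\<lambda>y. exp M * (nC a2 (h y - h x) * exp (nC a2 (h y - h x)))) \<longlongrightarrow> 0) (at x)" by simp
    qed
  qed
next
  case (Suc k)
  from Suc.prems(1)[unfolded Ck_Suc_iff] obtain Dh where f: "\<forall>x. SC a2 (h x)" "\<forall>i x. SC a2 (Dh i x)"
    "\<forall>x. ((\<lambda>y. nC a2 (rem h Dh x y) / norm (y - x)) \<longlongrightarrow> 0) (at x)" "\<forall>i. Ck_wrt (SC a2) (nC a2) k (Dh i)" by blast
  have hk: "Ck_wrt (SC a2) (nC a2) k h" by (rule Ck_Suc_mono[OF good_C[OF a2] Suc.prems(1)])
  have Sh: "\<And>y. SC a2 (h y)" "\<And>i y. SC a2 (Dh i y)" using f by auto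
  show ?case unfolding Ck_Suc_iff
  proof (intro conjI exI[of _ "\<lambda>i x. pmul (expf (h x)) (Dh i x)"] allI)
    fix x
    show "SC a2 (expf (h x))" using SC_expf Sh by blast
    fix i show "SC a2 (pmul (expf (h x)) (Dh i x))" by (intro SC_pmul SC_expf Sh)
  next
    fix i show "Ck_wrt (SC a2) (nC a2) k (\<lambda>x. pmul (expf (h x)) (Dh i x))"
      by (rule Ck_pmul[OF a2 Suc.IH[OF hk] f(4)[rule_format]])
  next
    fix x
    define M where "M = nC a2 (h x)"
    define C where "C = (\<Sum>i\<in>UNIV. nC a2 (Dh i x))"
    let ?R = "\<lambda>y. rem (\<lambda>x. expf (h x)) (\<lambda>i x. pmul (expf (h x)) (Dh i x)) x y"
    let ?d = "\<lambda>y. nC a2 (h y - h x)"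
    let ?r = "\<lambda>y. nC a2 (rem h Dh x y) / norm (y - x)"
    have Sd: "SC a2 (h y - h x)" for y using good_diff[of "SC a2" "nC a2" "h y" "h x", OF good_C[OF a2] Sh(1) Sh(1)] .
    have Sr: "SC a2 (rem h Dh x y)" for y
      using rem_S[of "SC a2" "nC a2" h y x Dh] Sh good_C[OF a2] by auto
    have SR: "SC a2 (?R y)" for y
      using rem_S[of "SC a2" "nC a2" "\<lambda>x. expf (h x)" y x "\<lambda>i x. pmul (expf (h x)) (Dh i x)"] Sh good_C[OF a2]
      by (auto intro: SC_pmul SC_expf)
    have Cnn: "0 \<le> C" unfolding C_def by (intro sum_nonneg nC_nonneg[OF a2] Sh)
    have dpos: "0 \<le> ?d y" for y by (rule nC_nonneg[OF a2 Sd])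
    have rpos: "0 \<le> ?r y" for y using nC_nonneg[OF a2 Sr] by simp
    show "((\<lambda>y. nC a2 (?R y) / norm (y - x)) \<longlongrightarrow> 0) (at x)"
    proof (rule sandwich0)
      show "\<forall>\<^sub>F y in at x. 0 \<le> nC a2 (?R y) / norm (y - x)"
        using nC_nonneg[OF a2 SR] by (intro always_eventually allI div_norm_nonneg) blast
      have "nC a2 (?R y) / norm (y - x) \<le> exp M * (?d y * (?r y + C) * exp (?d y) + ?r y)" if yx: "y \<noteq> x" for y
      proof -
        have np: "0 < norm (y - x)" using yx by simp
        have "nC a2 (?R y) \<le> exp M * ((?d y)\<^sup>2 * exp (?d y) + nC a2 (rem h Dh x y))"
        proof (rule nC_le[OF a2])
          fix a assume a: "a \<in> {0..a2}"
          have "?R y a = exp (h x a) * (exp (h y a - h x a) - 1 - (h y a - h x a)) + exp (h x a) * rem h Dh x y a"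
            by (simp add: rem_app expf_def pmul_def exp_diff sum_distrib_left algebra_simps del: vector_minus_component)
          then have "\<bar>?R y a\<bar> \<le> exp (h x a) * \<bar>exp (h y a - h x a) - 1 - (h y a - h x a)\<bar> + exp (h x a) * \<bar>rem h Dh x y a\<bar>"
            by (simp add: abs_mult order_trans[OF abs_triangle_ineq])
          also have "\<dots> \<le> exp M * ((?d y)\<^sup>2 * exp (?d y)) + exp M * nC a2 (rem h Dh x y)"
          proof (intro add_mono mult_mono)
            have 1: "h x a \<le> M" unfolding M_def using nC_ge[OF Sh(1) a, of x] by simp
            show "exp (h x a) \<le> exp M" "exp (h x a) \<le> exp M" using 1 by simp_all
            have 2: "\<bar>h y a - h x a\<bar> \<le> ?d y" using nC_ge[OF Sd a, of y] by simp
            show "\<bar>exp (h y a - h x a) - 1 - (h y a - h x a)\<bar> \<le> (?d y)\<^sup>2 * exp (?d y)"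
            proof (rule order_trans[OF exp_sub2])
              have "(h y a - h x a)\<^sup>2 \<le> (?d y)\<^sup>2" using 2 by (metis abs_ge_zero power2_abs power_mono)
              moreover have "exp \<bar>h y a - h x a\<bar> \<le> exp (?d y)" using 2 by simp
              ultimately show "(h y a - h x a)\<^sup>2 * exp \<bar>h y a - h x a\<bar> \<le> (?d y)\<^sup>2 * exp (?d y)"
                by (intro mult_mono) auto
            qed
            show "\<bar>rem h Dh x y a\<bar> \<le> nC a2 (rem h Dh x y)" by (rule nC_ge[OF Sr a])
          qed (auto simp: M_def intro!: nC_nonneg[OF a2] Sh mult_nonneg_nonneg)
          finally show "\<bar>?R y a\<bar> \<le> exp M * ((?d y)\<^sup>2 * exp (?d y) + nC a2 (rem h Dh x y))"
            by (simp add: distrib_left)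
        qed
        moreover have "?d y \<le> nC a2 (rem h Dh x y) + norm (y - x) * C"
          unfolding C_def using diff_bound_from_rem[of "SC a2" "nC a2" h Dh x y, OF good_C[OF a2] Sh(1) Sh(2)] .
        ultimately have A: "nC a2 (?R y) / norm (y - x) \<le> exp M * ((?d y)\<^sup>2 * exp (?d y) + nC a2 (rem h Dh x y)) / norm (y - x)"
          by (intro divide_right_mono) auto
        have B: "(?d y)\<^sup>2 / norm (y - x) \<le> ?d y * (?r y + C)"
        proof -
          have "?d y / norm (y - x) \<le> ?r y + C"
            using \<open>?d y \<le> nC a2 (rem h Dh x y) + norm (y - x) * C\<close> np by (simp add: field_simps)
          then have "?d y * (?d y / norm (y - x)) \<le> ?d y * (?r y + C)" using dpos by (intro mult_left_mono) auto
          then show ?thesis by (simp add: power2_eq_square)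
        qed
        have "exp M * ((?d y)\<^sup>2 * exp (?d y) + nC a2 (rem h Dh x y)) / norm (y - x)
              = exp M * ((?d y)\<^sup>2 / norm (y - x) * exp (?d y) + ?r y)" using np by (simp add: field_simps)
        also have "\<dots> \<le> exp M * (?d y * (?r y + C) * exp (?d y) + ?r y)"
          using B by (intro mult_left_mono add_mono mult_right_mono) auto
        finally show ?thesis using A by linarith
      qed
      then show "\<forall>\<^sub>F y in at x. nC a2 (?R y) / norm (y - x) \<le> exp M * (?d y * (?r y + C) * exp (?d y) + ?r y)"
        by (auto simp: eventually_at_filter)
      have "((\<lambda>y. exp M * (?d y * (?r y + C) * exp (?d y) + ?r y)) \<longlongrightarrow> exp M * (0 * (0 + C) * exp 0 + 0)) (at x)"
        by (intro tendsto_intros Ck_cont[OF good_C[OF a2] Suc.prems(1)] f(3)[rule_format])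
      then show "((\<lambda>y. exp M * (?d y * (?r y + C) * exp (?d y) + ?r y)) \<longlongrightarrow> 0) (at x)" by simp
    qed
  qed
qed

lemma Lm_emeasure: "0 < a2 \<Longrightarrow> emeasure (lebesgue_on {0<..<a2}) {0<..<(a2::real)} = ennreal a2"
  by (simp add: emeasure_restrict_space)

lemma Lm_measure: "0 \<le> b \<Longrightarrow> measure (lebesgue_on {0<..<b}) {0<..<(b::real)} = b"
  by (simp add: measure_restrict_space)

lemma Lm_finite: "finite_measure (lebesgue_on {0<..<(b::real)})"
  by (rule finite_measure_lebesgue_on) simp

lemma esssup_nonneg:
  assumes a2: "0 < (a2::real)"
  shows "0 \<le> esssup (lebesgue_on {0<..<a2}) (\<lambda>a. ereal \<bar>u a\<bar>)"
proof (rule ccontr)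
  assume "\<not> ?thesis"
  then have neg: "esssup (lebesgue_on {0<..<a2}) (\<lambda>a. ereal \<bar>u a\<bar>) < 0" by simp
  have "AE a in lebesgue_on {0<..<a2}. ereal \<bar>u a\<bar> \<le> esssup (lebesgue_on {0<..<a2}) (\<lambda>a. ereal \<bar>u a\<bar>)"
    by (rule esssup_AE)
  then have "AE a in lebesgue_on {0<..<a2}. False"
    by eventually_elim (use neg in \<open>auto dest: order.strict_trans1[of _ _ 0]\<close>)
  then have "emeasure (lebesgue_on {0<..<a2}) (space (lebesgue_on {0<..<a2})) = 0"
    using ae_filter_eq_bot_iff eventually_False by metis
  then show False using Lm_emeasure[OF a2] a2 by simp
qed

lemma Linf_nrm_nonneg: "0 < a2 \<Longrightarrow> 0 \<le> Linf_nrm a2 u"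
  unfolding Linf_nrm_def by (rule real_of_ereal_pos[OF esssup_nonneg])

lemma Linf_esssup:
  assumes a2: "0 < a2" and u: "Linf_mem a2 u"
  shows "esssup (lebesgue_on {0<..<a2}) (\<lambda>a. ereal \<bar>u a\<bar>) = ereal (Linf_nrm a2 u)"
proof -
  have "esssup (lebesgue_on {0<..<a2}) (\<lambda>a. ereal \<bar>u a\<bar>) < \<infinity>" using u by (simp add: Linf_mem_def)
  moreover have "0 \<le> esssup (lebesgue_on {0<..<a2}) (\<lambda>a. ereal \<bar>u a\<bar>)" by (rule esssup_nonneg[OF a2])
  ultimately show ?thesis unfolding Linf_nrm_def by (cases "esssup (lebesgue_on {0<..<a2}) (\<lambda>a. ereal \<bar>u a\<bar>)") auto
qed

lemma Linf_AE:
  assumes a2: "0 < a2" and u: "Linf_mem a2 u"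
  shows "AE a in lebesgue_on {0<..<a2}. \<bar>u a\<bar> \<le> Linf_nrm a2 u"
  using esssup_AE[of "\<lambda>a. ereal \<bar>u a\<bar>" "lebesgue_on {0<..<a2}"] Linf_esssup[OF a2 u] by simp

lemma Linf_meas: "Linf_mem a2 u \<Longrightarrow> u \<in> borel_measurable (lebesgue_on {0<..<a2})"
  by (simp add: Linf_mem_def)

lemma Linf_le:
  assumes a2: "0 < (a2::real)" and m: "u \<in> borel_measurable (lebesgue_on {0<..<a2})"
    and b: "AE a in lebesgue_on {0<..<a2}. \<bar>u a\<bar> \<le> c" and c: "0 \<le> c"
  shows "Linf_mem a2 u" "Linf_nrm a2 u \<le> c"
proof -
  have "esssup (lebesgue_on {0<..<a2}) (\<lambda>a. ereal \<bar>u a\<bar>) \<le> ereal c"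
    by (rule esssup_I) (use m b in auto)
  moreover have "0 \<le> esssup (lebesgue_on {0<..<a2}) (\<lambda>a. ereal \<bar>u a\<bar>)" by (rule esssup_nonneg[OF a2])
  ultimately show "Linf_mem a2 u" "Linf_nrm a2 u \<le> c"
    unfolding Linf_mem_def Linf_nrm_def using m
    by (cases "esssup (lebesgue_on {0<..<a2}) (\<lambda>a. ereal \<bar>u a\<bar>)"; auto)+
qed

lemma good_L:
  assumes a2: "0 < a2"
  shows "good (Linf_mem a2) (Linf_nrm a2)"
  unfolding good_def
proof (intro conjI allI impI)
  show "Linf_mem a2 0" by (rule Linf_le[OF a2, of 0 0]) (auto simp: zero_fun_def)
next
  fix u v assume u: "Linf_mem a2 u" and v: "Linf_mem a2 v"
  have m: "(u + v) \<in> borel_measurable (lebesgue_on {0<..<a2})"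
    using Linf_meas[OF u] Linf_meas[OF v] by (simp add: plus_fun_def)
  have b: "AE a in lebesgue_on {0<..<a2}. \<bar>(u + v) a\<bar> \<le> Linf_nrm a2 u + Linf_nrm a2 v"
    using Linf_AE[OF a2 u] Linf_AE[OF a2 v] by eventually_elim auto
  have c: "0 \<le> Linf_nrm a2 u + Linf_nrm a2 v" using Linf_nrm_nonneg[OF a2] by (simp add: add_nonneg_nonneg)
  show "Linf_mem a2 (u + v)" "Linf_nrm a2 (u + v) \<le> Linf_nrm a2 u + Linf_nrm a2 v"
    using Linf_le[OF a2 m b c] by (auto simp: plus_fun_def)
next
  fix r u assume u: "Linf_mem a2 u"
  have m: "(r *\<^sub>R u) \<in> borel_measurable (lebesgue_on {0<..<a2})"
    using Linf_meas[OF u] by (simp add: scaleR_fun_def)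
  have b: "AE a in lebesgue_on {0<..<a2}. \<bar>(r *\<^sub>R u) a\<bar> \<le> \<bar>r\<bar> * Linf_nrm a2 u"
    using Linf_AE[OF a2 u] by eventually_elim (auto simp: scaleR_fun_def abs_mult intro: mult_left_mono)
  have c: "0 \<le> \<bar>r\<bar> * Linf_nrm a2 u" using Linf_nrm_nonneg[OF a2] by simp
  show "Linf_mem a2 (r *\<^sub>R u)" "Linf_nrm a2 (r *\<^sub>R u) \<le> \<bar>r\<bar> * Linf_nrm a2 u"
    using Linf_le[OF a2 m b c] by auto
next
  fix u show "0 \<le> Linf_nrm a2 u" by (rule Linf_nrm_nonneg[OF a2])
qed


lemma sets_lebesgue_Ioo: "{a<..<b::real} \<in> sets lebesgue" by simp

lemma Linf_AE_sub:
  assumes a2: "0 < a2" and u: "Linf_mem a2 u" and b: "b \<le> a2"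
  shows "AE a in lebesgue_on {0<..<b}. \<bar>u a\<bar> \<le> Linf_nrm a2 u"
proof -
  have "AE x in lebesgue. x \<in> {0<..<a2} \<longrightarrow> \<bar>u x\<bar> \<le> Linf_nrm a2 u"
    using Linf_AE[OF a2 u] by (subst (asm) AE_restrict_space_iff) auto
  then have "AE x in lebesgue. x \<in> {0<..<b} \<longrightarrow> \<bar>u x\<bar> \<le> Linf_nrm a2 u"
    by eventually_elim (use b in auto)
  then show ?thesis by (subst AE_restrict_space_iff) auto
qed

lemma Linf_meas_sub:
  assumes u: "Linf_mem a2 u" and b: "b \<le> a2"
  shows "u \<in> borel_measurable (lebesgue_on {0<..<b})"
  by (rule measurable_restrict_mono[OF Linf_meas[OF u]]) (use b in auto)

lemma Linf_int_sub:
  assumes a2: "0 < a2" and u: "Linf_mem a2 u" and b: "0 \<le> b" "b \<le> a2"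
  shows "integrable (lebesgue_on {0<..<b}) u" "\<bar>integral\<^sup>L (lebesgue_on {0<..<b}) u\<bar> \<le> b * Linf_nrm a2 u"
proof -
  interpret finite_measure "lebesgue_on {0<..<b}" by (rule Lm_finite)
  have ae: "AE a in lebesgue_on {0<..<b}. \<bar>u a\<bar> \<le> Linf_nrm a2 u" by (rule Linf_AE_sub[OF a2 u b(2)])
  show i: "integrable (lebesgue_on {0<..<b}) u"
    by (rule integrable_const_bound[where B="Linf_nrm a2 u"]) (use ae Linf_meas_sub[OF u b(2)] in auto)
  have "\<bar>integral\<^sup>L (lebesgue_on {0<..<b}) u\<bar> \<le> (\<integral>x. \<bar>u x\<bar> \<partial>lebesgue_on {0<..<b})"
    by (rule integral_abs_bound)
  also have "\<dots> \<le> (\<integral>x. Linf_nrm a2 u \<partial>lebesgue_on {0<..<b})"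
    by (rule integral_mono_AE) (use i ae in auto)
  also have "\<dots> = b * Linf_nrm a2 u" using Lm_measure[OF b(1)] by simp
  finally show "\<bar>integral\<^sup>L (lebesgue_on {0<..<b}) u\<bar> \<le> b * Linf_nrm a2 u" .
qed

lemma Linf_conv:
  assumes a2: "0 < a2" and u: "Linf_mem a2 u" and b: "0 \<le> b" "b \<le> a2"
  shows "set_integrable lebesgue {0..b} u" "u integrable_on {0..b}"
    "(LINT s:{0..b}|lebesgue. u s) = integral\<^sup>L (lebesgue_on {0<..<b}) u"
    "integral {0..b} u = integral\<^sup>L (lebesgue_on {0<..<b}) u"
proof -
  have i: "integrable (lebesgue_on {0<..<b}) u" by (rule Linf_int_sub[OF a2 u b])
  have "u absolutely_integrable_on {0<..<b}"
    unfolding absolutely_integrable_measurable[of "{0<..<b}", OF sets_lebesgue_Ioo]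
    using Linf_meas_sub[OF u b(2)] integrable_norm[OF i] by (simp add: o_def)
  show si: "set_integrable lebesgue {0..b} u"
  proof (rule absolutely_integrable_spike_set[OF \<open>u absolutely_integrable_on {0<..<b}\<close>])
    show "negligible {x \<in> {0<..<b} - {0..b}. u x \<noteq> 0}" by (rule negligible_subset[of "{}"]) auto
    show "negligible {x \<in> {0..b} - {0<..<b}. u x \<noteq> 0}" by (rule negligible_subset[of "{0, b}"]) auto
  qed
  show "u integrable_on {0..b}" by (rule set_lebesgue_integral_eq_integral(1)[OF si])
  have e1: "integral {0..b} u = integral\<^sup>L (lebesgue_on {0<..<b}) u"
    using lebesgue_integral_eq_integral[OF i] integral_open_interval_real[of 0 b u] by simp
  show "integral {0..b} u = integral\<^sup>L (lebesgue_on {0<..<b}) u" by (rule e1)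
  show "(LINT s:{0..b}|lebesgue. u s) = integral\<^sup>L (lebesgue_on {0<..<b}) u"
    using set_lebesgue_integral_eq_integral(2)[OF si] e1 by simp
qed


definition JL :: "real \<Rightarrow> (real \<Rightarrow> real) \<Rightarrow> real" where
  "JL a2 u = integral\<^sup>L (lebesgue_on {0<..<a2}) u"

lemma JL_int: "0 < a2 \<Longrightarrow> Linf_mem a2 u \<Longrightarrow> integrable (lebesgue_on {0<..<a2}) u"
  using Linf_int_sub[of a2 u a2] by simp

lemma JL_bound: "0 < a2 \<Longrightarrow> Linf_mem a2 u \<Longrightarrow> \<bar>JL a2 u\<bar> \<le> a2 * Linf_nrm a2 u"
  unfolding JL_def using Linf_int_sub[of a2 u a2] by simp

lemma slin_JL: assumes "0 < a2" shows "slin (Linf_mem a2) (JL a2)"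
  unfolding slin_def JL_def
proof (intro conjI allI impI)
  fix u v assume "Linf_mem a2 u" "Linf_mem a2 v"
  then show "integral\<^sup>L (lebesgue_on {0<..<a2}) (u + v) = integral\<^sup>L (lebesgue_on {0<..<a2}) u + integral\<^sup>L (lebesgue_on {0<..<a2}) v"
    using JL_int[OF assms] by (simp add: plus_fun_def)
next
  fix r u
  show "integral\<^sup>L (lebesgue_on {0<..<a2}) (r *\<^sub>R u) = r *\<^sub>R integral\<^sup>L (lebesgue_on {0<..<a2}) u"
    by (simp add: scaleR_fun_def)
qed

lemma Ck_JL: assumes "0 < a2" "Ck_wrt (Linf_mem a2) (Linf_nrm a2) k f"
  shows "Ck_wrt (\<lambda>_. True) abs k (\<lambda>x. JL a2 (f x))"
  by (rule Ck_lin[OF good_L[OF assms(1)] good_R slin_JL[OF assms(1)], of a2]) (simp_all add: JL_bound assms)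

lemma SC_meas: "SC a2 v \<Longrightarrow> v \<in> borel_measurable (lebesgue_on {0<..<a2})"
  unfolding SC_def
  by (rule continuous_imp_measurable_on_sets_lebesgue) (auto elim: continuous_on_subset)

lemma Lmul_mem:
  assumes a2: "0 < a2" and u: "Linf_mem a2 u" and v: "SC a2 v"
  shows "Linf_mem a2 (pmul u v)" "Linf_nrm a2 (pmul u v) \<le> 1 * Linf_nrm a2 u * nC a2 v"
proof -
  have m: "pmul u v \<in> borel_measurable (lebesgue_on {0<..<a2})"
    unfolding pmul_def using Linf_meas[OF u] SC_meas[OF v] by simp
  have b: "AE a in lebesgue_on {0<..<a2}. \<bar>pmul u v a\<bar> \<le> Linf_nrm a2 u * nC a2 v"
    using Linf_AE[OF a2 u] AE_space[of "lebesgue_on {0<..<a2}"]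
  proof eventually_elim
    case (elim a)
    then have "\<bar>v a\<bar> \<le> nC a2 v" using nC_ge[OF v, of a] by auto
    then show ?case using elim unfolding pmul_def
      by (auto simp: abs_mult intro!: mult_mono Linf_nrm_nonneg[OF a2])
  qed
  have c: "0 \<le> Linf_nrm a2 u * nC a2 v" using Linf_nrm_nonneg[OF a2] nC_nonneg[OF _ v] a2 by simp
  show "Linf_mem a2 (pmul u v)" "Linf_nrm a2 (pmul u v) \<le> 1 * Linf_nrm a2 u * nC a2 v"
    using Linf_le[OF a2 m b c] by auto
qed

lemma Ck_Lmul: assumes "0 < a2" "Ck_wrt (Linf_mem a2) (Linf_nrm a2) k f" "Ck_wrt (SC a2) (nC a2) k g"
  shows "Ck_wrt (Linf_mem a2) (Linf_nrm a2) k (\<lambda>x. pmul (f x) (g x))"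
  using Ck_bil[of "Linf_mem a2" "Linf_nrm a2" "SC a2" "nC a2" "Linf_mem a2" "Linf_nrm a2" pmul 1 k f g]
    good_L[OF assms(1)] good_C[of a2] bilinear_pmul Lmul_mem[OF assms(1)] assms by simp

definition Pm :: "real \<Rightarrow> (real \<Rightarrow> real) \<Rightarrow> real \<Rightarrow> real" where
  "Pm a2 u = (\<lambda>a. if a \<in> {0..a2} then - integral {0..a} u else 0)"

lemma SC_Pm: assumes a2: "0 < a2" and u: "Linf_mem a2 u" shows "SC a2 (Pm a2 u)"
proof -
  have "continuous_on {0..a2} (\<lambda>a. integral {0..a} u)"
    by (rule indefinite_integral_continuous_1) (rule Linf_conv(2)[OF a2 u], use a2 in auto)
  then have "continuous_on {0..a2} (\<lambda>a. - integral {0..a} u)" by (intro continuous_intros)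
  then show ?thesis unfolding SC_def Pm_def by (rule continuous_on_eq) auto
qed

lemma slin_Pm: assumes a2: "0 < a2" shows "slin (Linf_mem a2) (Pm a2)"
  unfolding slin_def
proof (intro conjI allI impI)
  fix u v assume u: "Linf_mem a2 u" and v: "Linf_mem a2 v"
  show "Pm a2 (u + v) = Pm a2 u + Pm a2 v"
  proof (rule ext)
    fix a show "Pm a2 (u + v) a = (Pm a2 u + Pm a2 v) a"
    proof (cases "a \<in> {0..a2}")
      case True
      have "integral {0..a} (\<lambda>s. u s + v s) = integral {0..a} u + integral {0..a} v"
        by (rule integral_add) (use Linf_conv(2)[OF a2 u, of a] Linf_conv(2)[OF a2 v, of a] True in auto)
      then show ?thesis using True by (simp add: Pm_def plus_fun_def)
    next
      case False then show ?thesis by (auto simp: Pm_def)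
    qed
  qed
next
  fix r u
  show "Pm a2 (r *\<^sub>R u) = r *\<^sub>R Pm a2 u"
    by (rule ext) (simp add: Pm_def scaleR_fun_def)
qed

lemma nC_Pm: assumes a2: "0 < a2" and u: "Linf_mem a2 u" shows "nC a2 (Pm a2 u) \<le> a2 * Linf_nrm a2 u"
proof (rule nC_le)
  fix a assume a: "a \<in> {0..a2}"
  have "\<bar>Pm a2 u a\<bar> = \<bar>integral\<^sup>L (lebesgue_on {0<..<a}) u\<bar>"
    using a Linf_conv(4)[OF a2 u, of a] by (simp add: Pm_def)
  also have "\<dots> \<le> a * Linf_nrm a2 u" using Linf_int_sub(2)[OF a2 u, of a] a by auto
  also have "\<dots> \<le> a2 * Linf_nrm a2 u" using a Linf_nrm_nonneg[OF a2] by (intro mult_right_mono) auto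
  finally show "\<bar>Pm a2 u a\<bar> \<le> a2 * Linf_nrm a2 u" .
qed (use a2 in simp)

lemma Ck_Pm: assumes "0 < a2" "Ck_wrt (Linf_mem a2) (Linf_nrm a2) k f"
  shows "Ck_wrt (SC a2) (nC a2) k (\<lambda>x. Pm a2 (f x))"
  by (rule Ck_lin[OF good_L[OF assms(1)] good_C slin_Pm[OF assms(1)], of a2])
    (use assms SC_Pm nC_Pm in simp_all)

definition linr :: "real \<Rightarrow> real \<Rightarrow> real" where "linr r = (\<lambda>a. - (r * a))"

lemma slin_linr: "slin (\<lambda>_. True) linr"
  unfolding slin_def linr_def by (auto simp: fun_eq_iff plus_fun_def scaleR_fun_def algebra_simps)

lemma Ck_linr: assumes "0 \<le> a2" "Ck_wrt (\<lambda>_. True) abs k f"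
  shows "Ck_wrt (SC a2) (nC a2) k (\<lambda>x. linr (f x))"
proof (rule Ck_lin[OF good_R good_C[OF assms(1)] slin_linr, of a2])
  fix u show "SC a2 (linr u)" unfolding SC_def linr_def by (intro continuous_intros)
  show "nC a2 (linr u) \<le> a2 * \<bar>u\<bar>"
  proof (rule nC_le[OF assms(1)])
    fix a assume "a \<in> {0..a2}"
    then show "\<bar>linr u a\<bar> \<le> a2 * \<bar>u\<bar>" using mult_right_mono[of a a2 "\<bar>u\<bar>"] by (simp add: linr_def abs_mult mult.commute)
  qed
qed (rule assms(2))

definition mm :: "(real \<Rightarrow> real) \<Rightarrow> real \<Rightarrow> real" where "mm v = (\<lambda>a. - (a * v a))"

lemma slin_mm: "slin (SC a2) mm"
  unfolding slin_def mm_def by (auto simp: fun_eq_iff plus_fun_def scaleR_fun_def algebra_simps)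

lemma Ck_mm: assumes "0 \<le> a2" "Ck_wrt (SC a2) (nC a2) k f"
  shows "Ck_wrt (SC a2) (nC a2) k (\<lambda>x. mm (f x))"
proof (rule Ck_lin[OF good_C[OF assms(1)] good_C[OF assms(1)] slin_mm, of a2])
  fix u assume u: "SC a2 u"
  show "SC a2 (mm u)" using u unfolding SC_def mm_def by (intro continuous_intros)
  show "nC a2 (mm u) \<le> a2 * nC a2 u"
    by (rule nC_le[OF assms(1)]) (auto simp: mm_def abs_mult intro!: mult_mono nC_ge[OF u] nC_nonneg[OF assms(1) u])
qed (rule assms(2))

definition EE :: "real \<Rightarrow> real \<Rightarrow> real" where "EE r = expf (linr r)"

lemma EE_app: "EE r a = exp (- (r * a))"
  by (simp add: EE_def expf_def linr_def)

lemma neg_mul_le: assumes "0 \<le> a" "a \<le> a2" shows "- (r * a) \<le> \<bar>r\<bar> * (a2::real)"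
proof -
  have "- (r * a) \<le> \<bar>r * a\<bar>" by (rule abs_ge_minus_self)
  also have "\<dots> = \<bar>r\<bar> * a" using assms by (simp add: abs_mult)
  also have "\<dots> \<le> \<bar>r\<bar> * a2" using assms by (intro mult_left_mono) auto
  finally show ?thesis .
qed

lemma SC_EE: "SC a2 (EE r)"
  unfolding SC_def EE_def expf_def linr_def by (intro continuous_intros)

lemma nC_EE: assumes "0 \<le> a2" shows "nC a2 (EE r) \<le> exp (\<bar>r\<bar> * a2)"
proof (rule nC_le[OF assms])
  fix a assume a: "a \<in> {0..a2}"
  have "- (r * a) \<le> \<bar>r\<bar> * a2" using neg_mul_le[of a a2 r] a by auto
  then show "\<bar>EE r a\<bar> \<le> exp (\<bar>r\<bar> * a2)" by (simp add: EE_app)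
qed

lemma nC_EE_diff: assumes "0 \<le> a2"
  shows "nC a2 (EE r - EE r0) \<le> exp (\<bar>r0\<bar> * a2) * (\<bar>r - r0\<bar> * a2 * exp (\<bar>r - r0\<bar> * a2))"
proof (rule nC_le[OF assms])
  fix a assume a: "a \<in> {0..a2}"
  have "\<bar>(EE r - EE r0) a\<bar> = \<bar>exp (- (r * a)) - exp (- (r0 * a))\<bar>" by (simp add: EE_app)
  also have "\<dots> \<le> exp \<bar>- (r0 * a)\<bar> * (\<bar>- (r * a) - - (r0 * a)\<bar> * exp \<bar>- (r * a) - - (r0 * a)\<bar>)"
    by (rule exp_diff_bound)
  also have "\<dots> \<le> exp (\<bar>r0\<bar> * a2) * (\<bar>r - r0\<bar> * a2 * exp (\<bar>r - r0\<bar> * a2))"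
  proof -
    have 1: "\<bar>- (r0 * a)\<bar> \<le> \<bar>r0\<bar> * a2" using a by (auto simp: abs_mult intro: mult_left_mono)
    have e: "\<bar>- (r * a) - - (r0 * a)\<bar> = \<bar>r - r0\<bar> * a" using a by (simp add: abs_mult left_diff_distrib[symmetric] abs_minus_commute)
    have 2: "\<bar>r - r0\<bar> * a \<le> \<bar>r - r0\<bar> * a2" using a by (intro mult_left_mono) auto
    show ?thesis unfolding e using 1 2 a by (intro mult_mono) auto
  qed
  finally show "\<bar>(EE r - EE r0) a\<bar> \<le> exp (\<bar>r0\<bar> * a2) * (\<bar>r - r0\<bar> * a2 * exp (\<bar>r - r0\<bar> * a2))" .
qed

lemma nC_EE_taylor: assumes "0 \<le> a2"
  shows "nC a2 (EE r - EE r0 - (r - r0) *\<^sub>R mm (EE r0)) \<le> exp (\<bar>r0\<bar> * a2) * ((r - r0)\<^sup>2 * a2\<^sup>2 * exp (\<bar>r - r0\<bar> * a2))"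
proof (rule nC_le[OF assms])
  fix a assume a: "a \<in> {0..a2}"
  define d where "d = - ((r - r0) * a)"
  have ed: "exp (- (r * a)) = exp (- (r0 * a)) * exp d"
  proof -
    have "- (r * a) = - (r0 * a) + d" unfolding d_def by (simp add: algebra_simps)
    then show ?thesis by (simp only: exp_add)
  qed
  have "(EE r - EE r0 - (r - r0) *\<^sub>R mm (EE r0)) a = exp (- (r * a)) - exp (- (r0 * a)) + (r - r0) * (a * exp (- (r0 * a)))"
    by (simp add: EE_app mm_def scaleR_fun_def)
  also have "\<dots> = exp (- (r0 * a)) * (exp d - 1 - d)"
    unfolding ed d_def by (simp add: algebra_simps)
  finally have "(EE r - EE r0 - (r - r0) *\<^sub>R mm (EE r0)) a = exp (- (r0 * a)) * (exp d - 1 - d)" .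
  then have "\<bar>(EE r - EE r0 - (r - r0) *\<^sub>R mm (EE r0)) a\<bar> = exp (- (r0 * a)) * \<bar>exp d - 1 - d\<bar>"
    by (simp add: abs_mult)
  also have "\<dots> \<le> exp (\<bar>r0\<bar> * a2) * (d\<^sup>2 * exp \<bar>d\<bar>)"
  proof (intro mult_mono exp_sub2)
    show "exp (- (r0 * a)) \<le> exp (\<bar>r0\<bar> * a2)"
      using neg_mul_le[of a a2 r0] a by auto
  qed auto
  also have "\<dots> \<le> exp (\<bar>r0\<bar> * a2) * ((r - r0)\<^sup>2 * a2\<^sup>2 * exp (\<bar>r - r0\<bar> * a2))"
  proof -
    have ad: "\<bar>d\<bar> \<le> \<bar>r - r0\<bar> * a2" using a unfolding d_def by (auto simp: abs_mult intro: mult_left_mono)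
    have "d\<^sup>2 = \<bar>d\<bar>\<^sup>2" by simp
    also have "\<dots> \<le> (\<bar>r - r0\<bar> * a2)\<^sup>2" by (rule power_mono[OF ad]) simp
    also have "\<dots> = (r - r0)\<^sup>2 * a2\<^sup>2" by (simp add: power_mult_distrib)
    finally have "d\<^sup>2 \<le> (r - r0)\<^sup>2 * a2\<^sup>2" .
    moreover have "exp \<bar>d\<bar> \<le> exp (\<bar>r - r0\<bar> * a2)" using ad by simp
    ultimately show ?thesis by (intro mult_left_mono mult_mono) auto
  qed
  finally show "\<bar>(EE r - EE r0 - (r - r0) *\<^sub>R mm (EE r0)) a\<bar> \<le> exp (\<bar>r0\<bar> * a2) * ((r - r0)\<^sup>2 * a2\<^sup>2 * exp (\<bar>r - r0\<bar> * a2))" .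
qed


lemma JP_bound:
  assumes a2: "0 < a2" and u: "Linf_mem a2 u" and v: "SC a2 v"
  shows "\<bar>JL a2 (pmul u v)\<bar> \<le> a2 * Linf_nrm a2 u * nC a2 v"
proof -
  have "\<bar>JL a2 (pmul u v)\<bar> \<le> a2 * Linf_nrm a2 (pmul u v)" by (rule JL_bound[OF a2 Lmul_mem(1)[OF a2 u v]])
  also have "\<dots> \<le> a2 * (Linf_nrm a2 u * nC a2 v)" using Lmul_mem(2)[OF a2 u v] a2 by (intro mult_left_mono) auto
  finally show ?thesis by (simp add: mult.assoc)
qed

lemma pmul_diff_r: "pmul u (v - w) = pmul u v - pmul u w"
  by (simp add: pmul_def fun_eq_iff algebra_simps)
lemma pmul_diff_l: "pmul (u - u') v = pmul u v - pmul u' v"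
  by (simp add: pmul_def fun_eq_iff algebra_simps)

lemma JP_diff_r:
  assumes a2: "0 < a2" and u: "Linf_mem a2 u" and v: "SC a2 v" and w: "SC a2 w"
  shows "JL a2 (pmul u (v - w)) = JL a2 (pmul u v) - JL a2 (pmul u w)"
  unfolding pmul_diff_r
  by (rule slin_diff[of "Linf_mem a2" "Linf_nrm a2" "JL a2" "pmul u v" "pmul u w", OF good_L[OF a2] slin_JL[OF a2] Lmul_mem(1)[OF a2 u v] Lmul_mem(1)[OF a2 u w]])

lemma JP_diff_l:
  assumes a2: "0 < a2" and u: "Linf_mem a2 u" and u': "Linf_mem a2 u'" and v: "SC a2 v"
  shows "JL a2 (pmul (u - u') v) = JL a2 (pmul u v) - JL a2 (pmul u' v)"
  unfolding pmul_diff_l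
  by (rule slin_diff[of "Linf_mem a2" "Linf_nrm a2" "JL a2" "pmul u v" "pmul u' v", OF good_L[OF a2] slin_JL[OF a2] Lmul_mem(1)[OF a2 u v] Lmul_mem(1)[OF a2 u' v]])

lemma JP_nonneg:
  assumes a2: "0 < a2" and u: "Linf_mem a2 u" and up: "AE a in lebesgue_on {0<..<a2}. 0 \<le> u a"
    and v: "SC a2 v" and vp: "\<And>a. a \<in> {0<..<a2} \<Longrightarrow> 0 \<le> v a"
  shows "0 \<le> JL a2 (pmul u v)"
  unfolding JL_def
proof (rule integral_nonneg_AE)
  show "AE a in lebesgue_on {0<..<a2}. 0 \<le> pmul u v a"
    using up AE_space[of "lebesgue_on {0<..<a2}"] by eventually_elim (auto simp: pmul_def vp)
qed

lemma JP_zero_AE: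
  assumes a2: "0 < a2" and u: "Linf_mem a2 u" and v: "SC a2 v" and z: "AE a in lebesgue_on {0<..<a2}. u a = 0"
  shows "JL a2 (pmul u v) = 0"
proof -
  have "JL a2 (pmul u v) = integral\<^sup>L (lebesgue_on {0<..<a2}) (\<lambda>a. 0::real)"
    unfolding JL_def
    by (rule integral_cong_AE) (use Lmul_mem(1)[OF a2 u v] z in \<open>auto simp: Linf_mem_def pmul_def\<close>)
  then show ?thesis by simp
qed

lemma JP_pos:
  assumes a2: "0 < a2" and u: "Linf_mem a2 u" and up: "AE a in lebesgue_on {0<..<a2}. 0 \<le> u a"
    and nz: "\<not> (AE a in lebesgue_on {0<..<a2}. u a = 0)"
    and v: "SC a2 v" and vp: "\<And>a. a \<in> {0<..<a2} \<Longrightarrow> 0 < v a"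
  shows "0 < JL a2 (pmul u v)"
proof -
  have ge: "0 \<le> JL a2 (pmul u v)" by (rule JP_nonneg[OF a2 u up v]) (use vp in \<open>auto intro: less_imp_le\<close>)
  have i: "integrable (lebesgue_on {0<..<a2}) (pmul u v)" by (rule JL_int[OF a2 Lmul_mem(1)[OF a2 u v]])
  have ae: "AE a in lebesgue_on {0<..<a2}. 0 \<le> pmul u v a"
    using up AE_space[of "lebesgue_on {0<..<a2}"] by eventually_elim (auto simp: pmul_def vp less_imp_le)
  have "JL a2 (pmul u v) \<noteq> 0"
  proof
    assume "JL a2 (pmul u v) = 0"
    then have "AE a in lebesgue_on {0<..<a2}. pmul u v a = 0"
      using integral_nonneg_eq_0_iff_AE[OF i ae] unfolding JL_def by simp
    then have "AE a in lebesgue_on {0<..<a2}. u a = 0"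
      using AE_space[of "lebesgue_on {0<..<a2}"]
    proof eventually_elim
      case (elim a)
      then have "0 < v a" using vp by auto
      then show ?case using elim by (simp add: pmul_def)
    qed
    then show False using nz by simp
  qed
  then show ?thesis using ge by simp
qed

lemma EE_diff_pos: "r < r' \<Longrightarrow> 0 < a \<Longrightarrow> 0 < (EE r - EE r') a"
  by (simp add: EE_app)

lemma EE_diff_nonneg: "r \<le> r' \<Longrightarrow> 0 \<le> a \<Longrightarrow> 0 \<le> (EE r - EE r') a"
  by (simp add: EE_app mult_right_mono)

lemma G_mono:
  assumes a2: "0 < a2" and u: "Linf_mem a2 u" and up: "AE a in lebesgue_on {0<..<a2}. 0 \<le> u a" and r: "r \<le> r'"
  shows "JL a2 (pmul u (EE r')) \<le> JL a2 (pmul u (EE r))"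
proof -
  have "0 \<le> JL a2 (pmul u (EE r - EE r'))"
    by (rule JP_nonneg[OF a2 u up good_diff[of "SC a2" "nC a2", OF good_C SC_EE SC_EE]]) (use a2 EE_diff_nonneg[OF r] in auto)
  then show ?thesis using JP_diff_r[OF a2 u SC_EE SC_EE] by simp
qed

lemma G_strict:
  assumes a2: "0 < a2" and u: "Linf_mem a2 u" and up: "AE a in lebesgue_on {0<..<a2}. 0 \<le> u a"
    and nz: "\<not> (AE a in lebesgue_on {0<..<a2}. u a = 0)" and r: "r < r'"
  shows "JL a2 (pmul u (EE r')) < JL a2 (pmul u (EE r))"
proof -
  have "0 < JL a2 (pmul u (EE r - EE r'))"
    by (rule JP_pos[OF a2 u up nz good_diff[of "SC a2" "nC a2", OF good_C SC_EE SC_EE]]) (use a2 EE_diff_pos[OF r] in auto)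
  then show ?thesis using JP_diff_r[OF a2 u SC_EE SC_EE] by simp
qed

lemma nz_of_one:
  assumes a2: "0 < a2" and u: "Linf_mem a2 u" and v: "SC a2 v" and one: "JL a2 (pmul u v) = 1"
  shows "\<not> (AE a in lebesgue_on {0<..<a2}. u a = 0)"
  using JP_zero_AE[OF a2 u v] one by auto


lemma G_lip:
  assumes a2: "0 < a2" and u: "Linf_mem a2 u" and u': "Linf_mem a2 u'"
  shows "\<bar>JL a2 (pmul u (EE r)) - JL a2 (pmul u' (EE r))\<bar> \<le> a2 * Linf_nrm a2 (u - u') * exp (\<bar>r\<bar> * a2)"
proof -
  have d: "Linf_mem a2 (u - u')" by (rule good_diff[of "Linf_mem a2" "Linf_nrm a2" u u', OF good_L[OF a2] u u'])
  have "\<bar>JL a2 (pmul u (EE r)) - JL a2 (pmul u' (EE r))\<bar> = \<bar>JL a2 (pmul (u - u') (EE r))\<bar>"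
    using JP_diff_l[OF a2 u u' SC_EE] by simp
  also have "\<dots> \<le> a2 * Linf_nrm a2 (u - u') * nC a2 (EE r)" by (rule JP_bound[OF a2 d SC_EE])
  also have "\<dots> \<le> a2 * Linf_nrm a2 (u - u') * exp (\<bar>r\<bar> * a2)"
    using nC_EE[of a2 r] a2 Linf_nrm_nonneg[OF a2] by (intro mult_left_mono) auto
  finally show ?thesis .
qed

lemma alpha_cont:
  assumes a2: "0 < a2" and pm: "\<And>x. Linf_mem a2 (p x)" and pp: "\<And>x. AE a in lebesgue_on {0<..<a2}. 0 \<le> p x a"
    and pc: "((\<lambda>y. Linf_nrm a2 (p y - p x)) \<longlongrightarrow> 0) (at x)"
    and one: "\<And>x. JL a2 (pmul (p x) (EE (\<alpha> x))) = 1"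
  shows "(\<alpha> \<longlongrightarrow> \<alpha> x) (at x)"
proof (rule tendstoI)
  fix e :: real assume e: "0 < e"
  let ?G = "\<lambda>u r. JL a2 (pmul u (EE r))"
  have nz: "\<not> (AE a in lebesgue_on {0<..<a2}. p x a = 0)" by (rule nz_of_one[OF a2 pm SC_EE one])
  have g1: "?G (p x) (\<alpha> x + e) < 1" using G_strict[OF a2 pm pp nz, of "\<alpha> x" "\<alpha> x + e"] e one[of x] by simp
  have g2: "1 < ?G (p x) (\<alpha> x - e)" using G_strict[OF a2 pm pp nz, of "\<alpha> x - e" "\<alpha> x"] e one[of x] by simp
  have lim: "((\<lambda>y. a2 * Linf_nrm a2 (p y - p x) * exp (\<bar>r\<bar> * a2)) \<longlongrightarrow> 0) (at x)" for r
    using tendsto_mult[OF tendsto_mult[OF tendsto_const pc] tendsto_const, of a2 "exp (\<bar>r\<bar> * a2)"] by simp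
  have ev1: "\<forall>\<^sub>F y in at x. a2 * Linf_nrm a2 (p y - p x) * exp (\<bar>\<alpha> x + e\<bar> * a2) < 1 - ?G (p x) (\<alpha> x + e)"
    by (rule order_tendstoD(2)[OF lim]) (use g1 in simp)
  have ev2: "\<forall>\<^sub>F y in at x. a2 * Linf_nrm a2 (p y - p x) * exp (\<bar>\<alpha> x - e\<bar> * a2) < ?G (p x) (\<alpha> x - e) - 1"
    by (rule order_tendstoD(2)[OF lim]) (use g2 in simp)
  show "\<forall>\<^sub>F y in at x. dist (\<alpha> y) (\<alpha> x) < e"
    using ev1 ev2
  proof eventually_elim
    case (elim y)
    have up: "\<alpha> y < \<alpha> x + e"
    proof (rule ccontr)
      assume "\<not> \<alpha> y < \<alpha> x + e"
      then have "?G (p y) (\<alpha> y) \<le> ?G (p y) (\<alpha> x + e)" by (intro G_mono[OF a2 pm pp]) simp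
      moreover have "?G (p y) (\<alpha> x + e) < 1"
        using G_lip[OF a2 pm[of y] pm[of x], of "\<alpha> x + e"] elim(1) by linarith
      ultimately show False using one[of y] by simp
    qed
    have lo: "\<alpha> x - e < \<alpha> y"
    proof (rule ccontr)
      assume "\<not> \<alpha> x - e < \<alpha> y"
      then have "?G (p y) (\<alpha> x - e) \<le> ?G (p y) (\<alpha> y)" by (intro G_mono[OF a2 pm pp]) simp
      moreover have "1 < ?G (p y) (\<alpha> x - e)"
        using G_lip[OF a2 pm[of y] pm[of x], of "\<alpha> x - e"] elim(2) by linarith
      ultimately show False using one[of y] by simp
    qed
    show ?case using up lo by (simp add: dist_real_def abs_less_iff)
  qed
qed


lemma pmul_add_l: "pmul (u + u') v = pmul u v + pmul u' v"
  by (simp add: pmul_def fun_eq_iff algebra_simps)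
lemma pmul_add_r: "pmul u (v + v') = pmul u v + pmul u v'"
  by (simp add: pmul_def fun_eq_iff algebra_simps)
lemma pmul_scale_l: "pmul (r *\<^sub>R u) v = r *\<^sub>R pmul u v"
  by (simp add: pmul_def fun_eq_iff scaleR_fun_def)
lemma pmul_scale_r: "pmul u (r *\<^sub>R v) = r *\<^sub>R pmul u v"
  by (simp add: pmul_def fun_eq_iff scaleR_fun_def algebra_simps)

lemma slin_JPu: assumes a2: "0 < a2" and v: "SC a2 v" shows "slin (Linf_mem a2) (\<lambda>u. JL a2 (pmul u v))"
  unfolding slin_def
proof (intro conjI allI impI)
  fix u u' assume u: "Linf_mem a2 u" and u': "Linf_mem a2 u'"
  show "JL a2 (pmul (u + u') v) = JL a2 (pmul u v) + JL a2 (pmul u' v)"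
    unfolding pmul_add_l by (rule slin_add[of "Linf_mem a2" "JL a2", OF slin_JL[OF a2] Lmul_mem(1)[OF a2 u v] Lmul_mem(1)[OF a2 u' v]])
next
  fix r u assume u: "Linf_mem a2 u"
  show "JL a2 (pmul (r *\<^sub>R u) v) = r *\<^sub>R JL a2 (pmul u v)"
    unfolding pmul_scale_l by (rule slin_scale[of "Linf_mem a2" "JL a2", OF slin_JL[OF a2] Lmul_mem(1)[OF a2 u v]])
qed

lemma slin_JPv: assumes a2: "0 < a2" and u: "Linf_mem a2 u" shows "slin (SC a2) (\<lambda>v. JL a2 (pmul u v))"
  unfolding slin_def
proof (intro conjI allI impI)
  fix v v' assume v: "SC a2 v" and v': "SC a2 v'"
  show "JL a2 (pmul u (v + v')) = JL a2 (pmul u v) + JL a2 (pmul u v')"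
    unfolding pmul_add_r by (rule slin_add[of "Linf_mem a2" "JL a2", OF slin_JL[OF a2] Lmul_mem(1)[OF a2 u v] Lmul_mem(1)[OF a2 u v']])
next
  fix r v assume v: "SC a2 v"
  show "JL a2 (pmul u (r *\<^sub>R v)) = r *\<^sub>R JL a2 (pmul u v)"
    unfolding pmul_scale_r by (rule slin_scale[of "Linf_mem a2" "JL a2", OF slin_JL[OF a2] Lmul_mem(1)[OF a2 u v]])
qed

lemma SC_mm: "SC a2 v \<Longrightarrow> SC a2 (mm v)"
  unfolding SC_def mm_def by (intro continuous_intros)

lemma c_neg:
  assumes a2: "0 < a2" and u: "Linf_mem a2 u" and up: "AE a in lebesgue_on {0<..<a2}. 0 \<le> u a"
    and nz: "\<not> (AE a in lebesgue_on {0<..<a2}. u a = 0)"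
  shows "JL a2 (pmul u (mm (EE r))) < 0"
proof -
  have v: "SC a2 (\<lambda>a. a * EE r a)" unfolding SC_def EE_def expf_def linr_def by (intro continuous_intros)
  have "0 < JL a2 (pmul u (\<lambda>a. a * EE r a))"
    by (rule JP_pos[OF a2 u up nz v]) (simp add: EE_app)
  moreover have "mm (EE r) = (-1) *\<^sub>R (\<lambda>a. a * EE r a)" by (simp add: mm_def fun_eq_iff scaleR_fun_def)
  ultimately show ?thesis using slin_scale[of "SC a2" "\<lambda>v. JL a2 (pmul u v)", OF slin_JPv[OF a2 u] v, of "-1"] by simp
qed

lemma lim_small: "(g \<longlongrightarrow> 0) F \<Longrightarrow> ((\<lambda>y. K * \<bar>g y\<bar> * exp (\<bar>g y\<bar> * a2)) \<longlongrightarrow> (0::real)) F"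
proof -
  assume "(g \<longlongrightarrow> 0) F"
  then have "((\<lambda>y. K * \<bar>g y\<bar> * exp (\<bar>g y\<bar> * a2)) \<longlongrightarrow> K * \<bar>0\<bar> * exp (\<bar>0\<bar> * a2)) F"
    by (intro tendsto_intros)
  then show ?thesis by simp
qed

lemma alpha_diff:
  fixes p :: "real^'n \<Rightarrow> real \<Rightarrow> real" and Dp :: "'n \<Rightarrow> real^'n \<Rightarrow> real \<Rightarrow> real"
    and \<alpha> :: "real^'n \<Rightarrow> real" and F :: "'n \<Rightarrow> real^'n \<Rightarrow> real"
  assumes a2: "0 < a2" and pm: "\<And>x. Linf_mem a2 (p x)" and pp: "\<And>x. AE a in lebesgue_on {0<..<a2}. 0 \<le> p x a"
    and Dm: "\<And>i x. Linf_mem a2 (Dp i x)"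
    and pd: "((\<lambda>y. Linf_nrm a2 (rem p Dp x y) / norm (y - x)) \<longlongrightarrow> 0) (at x)"
    and ac: "(\<alpha> \<longlongrightarrow> \<alpha> x) (at x)"
    and one: "\<And>x. JL a2 (pmul (p x) (EE (\<alpha> x))) = 1"
    and F: "\<And>i. F i x = - JL a2 (pmul (Dp i x) (EE (\<alpha> x))) * inverse (JL a2 (pmul (p x) (mm (EE (\<alpha> x)))))"
  shows "((\<lambda>y. \<bar>rem \<alpha> F x y\<bar> / norm (y - x)) \<longlongrightarrow> 0) (at x)"
proof -
  define r0 where "r0 = \<alpha> x"
  define c where "c = JL a2 (pmul (p x) (mm (EE r0)))"
  define G where "G = (\<lambda>u r. JL a2 (pmul u (EE r)))"
  define A where "A = (\<lambda>y. JL a2 (pmul (rem p Dp x y) (EE (\<alpha> y))))"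
  define Jd where "Jd = (\<lambda>i y. JL a2 (pmul (Dp i x) (EE (\<alpha> y))))"
  define q where "q = (\<lambda>y. if \<alpha> y = r0 then c else (G (p x) (\<alpha> y) - G (p x) r0) / (\<alpha> y - r0))"
  define K1 where "K1 = a2 * Linf_nrm a2 (p x) * exp (\<bar>r0\<bar> * a2) * a2\<^sup>2"
  have a2': "0 \<le> a2" using a2 by simp
  have nz: "\<not> (AE a in lebesgue_on {0<..<a2}. p x a = 0)" by (rule nz_of_one[OF a2 pm SC_EE one])
  have cneg: "c < 0" unfolding c_def by (rule c_neg[OF a2 pm pp nz])
  have Srem: "Linf_mem a2 (rem p Dp x y)" for y
    using rem_S[of "Linf_mem a2" "Linf_nrm a2" p y x Dp] good_L[OF a2] pm Dm by auto
  have K1nn: "0 \<le> K1" unfolding K1_def using a2 Linf_nrm_nonneg[OF a2] by simp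
  have Fx: "F i x = - Jd i x / c" for i unfolding F Jd_def c_def r0_def by (simp add: divide_inverse)
  have ident: "A y + (\<Sum>i\<in>UNIV. (y - x) $ i * Jd i y) + (\<alpha> y - r0) * q y = 0" for y
  proof -
    have sl: "slin (Linf_mem a2) (\<lambda>u. JL a2 (pmul u (EE (\<alpha> y))))" by (rule slin_JPu[OF a2 SC_EE])
    have "rem (\<lambda>x. JL a2 (pmul (p x) (EE (\<alpha> y)))) (\<lambda>i x. JL a2 (pmul (Dp i x) (EE (\<alpha> y)))) x y = JL a2 (pmul (rem p Dp x y) (EE (\<alpha> y)))"
      by (rule slin_rem[of "Linf_mem a2" "Linf_nrm a2" "\<lambda>u. JL a2 (pmul u (EE (\<alpha> y)))" p Dp x y, OF good_L[OF a2] sl pm Dm])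
    then have e1: "A y = 1 - G (p x) (\<alpha> y) - (\<Sum>i\<in>UNIV. (y - x) $ i * Jd i y)"
      unfolding A_def G_def Jd_def rem_def using one[of y] by (simp del: vector_minus_component)
    have e2: "(\<alpha> y - r0) * q y = G (p x) (\<alpha> y) - 1"
      using one[of x] by (simp add: q_def G_def r0_def)
    show ?thesis using e1 e2 by simp
  qed
  have Abound: "\<bar>A y\<bar> \<le> a2 * Linf_nrm a2 (rem p Dp x y) * exp (\<bar>\<alpha> y\<bar> * a2)" for y
  proof -
    have "\<bar>A y\<bar> \<le> a2 * Linf_nrm a2 (rem p Dp x y) * nC a2 (EE (\<alpha> y))"
      unfolding A_def by (rule JP_bound[OF a2 Srem SC_EE])
    also have "\<dots> \<le> a2 * Linf_nrm a2 (rem p Dp x y) * exp (\<bar>\<alpha> y\<bar> * a2)"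
      using nC_EE[OF a2', of "\<alpha> y"] a2 Linf_nrm_nonneg[OF a2] by (intro mult_left_mono) auto
    finally show ?thesis .
  qed
  have qbound: "\<bar>q y - c\<bar> \<le> K1 * \<bar>\<alpha> y - r0\<bar> * exp (\<bar>\<alpha> y - r0\<bar> * a2)" for y
  proof (cases "\<alpha> y = r0")
    case True then show ?thesis using K1nn by (simp add: q_def)
  next
    case False
    define d where "d = \<alpha> y - r0"
    have d0: "d \<noteq> 0" using False by (simp add: d_def)
    have SC3: "SC a2 (EE (\<alpha> y) - EE r0)" "SC a2 (d *\<^sub>R mm (EE r0))"
      using good_diff[of "SC a2" "nC a2" "EE (\<alpha> y)" "EE r0", OF good_C[OF a2'] SC_EE SC_EE]
        goodD(3)[of "SC a2" "nC a2" "mm (EE r0)" d, OF good_C[OF a2'] SC_mm[OF SC_EE]] by auto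
    have sl: "slin (SC a2) (\<lambda>v. JL a2 (pmul (p x) v))" by (rule slin_JPv[OF a2 pm])
    have num: "G (p x) (\<alpha> y) - G (p x) r0 - c * d = JL a2 (pmul (p x) (EE (\<alpha> y) - EE r0 - d *\<^sub>R mm (EE r0)))"
    proof -
      have "JL a2 (pmul (p x) (EE (\<alpha> y) - EE r0 - d *\<^sub>R mm (EE r0))) =
            JL a2 (pmul (p x) (EE (\<alpha> y) - EE r0)) - JL a2 (pmul (p x) (d *\<^sub>R mm (EE r0)))"
        by (rule slin_diff[of "SC a2" "nC a2" "\<lambda>v. JL a2 (pmul (p x) v)", OF good_C[OF a2'] sl SC3])
      also have "\<dots> = JL a2 (pmul (p x) (EE (\<alpha> y))) - JL a2 (pmul (p x) (EE r0)) - d * c"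
        using slin_diff[of "SC a2" "nC a2" "\<lambda>v. JL a2 (pmul (p x) v)", OF good_C[OF a2'] sl SC_EE SC_EE]
          slin_scale[of "SC a2" "\<lambda>v. JL a2 (pmul (p x) v)", OF sl SC_mm[OF SC_EE], of d] unfolding c_def by simp
      finally show ?thesis unfolding G_def by simp
    qed
    have "\<bar>G (p x) (\<alpha> y) - G (p x) r0 - c * d\<bar> \<le> a2 * Linf_nrm a2 (p x) * nC a2 (EE (\<alpha> y) - EE r0 - d *\<^sub>R mm (EE r0))"
      unfolding num
      by (rule JP_bound[OF a2 pm good_diff[of "SC a2" "nC a2", OF good_C[OF a2'] SC3]])
    also have "\<dots> \<le> a2 * Linf_nrm a2 (p x) * (exp (\<bar>r0\<bar> * a2) * ((\<alpha> y - r0)\<^sup>2 * a2\<^sup>2 * exp (\<bar>\<alpha> y - r0\<bar> * a2)))"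
      using nC_EE_taylor[OF a2', of "\<alpha> y" r0] a2 Linf_nrm_nonneg[OF a2] unfolding d_def by (intro mult_left_mono) auto
    also have "\<dots> = K1 * d\<^sup>2 * exp (\<bar>d\<bar> * a2)" unfolding K1_def d_def by (simp add: algebra_simps)
    finally have nb: "\<bar>G (p x) (\<alpha> y) - G (p x) r0 - c * d\<bar> \<le> K1 * d\<^sup>2 * exp (\<bar>d\<bar> * a2)" .
    have "q y - c = (G (p x) (\<alpha> y) - G (p x) r0 - c * d) / d"
      using d0 False unfolding q_def d_def by (simp add: field_simps)
    then have "\<bar>q y - c\<bar> = \<bar>G (p x) (\<alpha> y) - G (p x) r0 - c * d\<bar> / \<bar>d\<bar>" by simp
    also have "\<dots> \<le> K1 * d\<^sup>2 * exp (\<bar>d\<bar> * a2) / \<bar>d\<bar>" using nb d0 by (intro divide_right_mono) auto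
    also have "\<dots> = K1 * \<bar>d\<bar> * exp (\<bar>d\<bar> * a2)" using d0 by (simp add: power2_eq_square field_simps abs_mult_self_eq)
    finally show ?thesis unfolding d_def .
  qed
  have Jbound: "\<bar>Jd i y - Jd i x\<bar> \<le> (a2 * Linf_nrm a2 (Dp i x) * exp (\<bar>r0\<bar> * a2) * a2) * \<bar>\<alpha> y - r0\<bar> * exp (\<bar>\<alpha> y - r0\<bar> * a2)" for i y
  proof -
    have "\<bar>Jd i y - Jd i x\<bar> = \<bar>JL a2 (pmul (Dp i x) (EE (\<alpha> y) - EE r0))\<bar>"
      unfolding Jd_def r0_def using JP_diff_r[OF a2 Dm SC_EE SC_EE] by simp
    also have "\<dots> \<le> a2 * Linf_nrm a2 (Dp i x) * nC a2 (EE (\<alpha> y) - EE r0)"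
      by (rule JP_bound[OF a2 Dm good_diff[of "SC a2" "nC a2", OF good_C[OF a2'] SC_EE SC_EE]])
    also have "\<dots> \<le> a2 * Linf_nrm a2 (Dp i x) * (exp (\<bar>r0\<bar> * a2) * (\<bar>\<alpha> y - r0\<bar> * a2 * exp (\<bar>\<alpha> y - r0\<bar> * a2)))"
      using nC_EE_diff[OF a2', of "\<alpha> y" r0] a2 Linf_nrm_nonneg[OF a2] by (intro mult_left_mono) auto
    also have "\<dots> = (a2 * Linf_nrm a2 (Dp i x) * exp (\<bar>r0\<bar> * a2) * a2) * \<bar>\<alpha> y - r0\<bar> * exp (\<bar>\<alpha> y - r0\<bar> * a2)"
      by (simp add: algebra_simps)
    finally show ?thesis .
  qed
  have dl: "((\<lambda>y. \<alpha> y - r0) \<longlongrightarrow> 0) (at x)" unfolding r0_def using ac by (rule LIM_zero)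
  have qlim: "(q \<longlongrightarrow> c) (at x)"
  proof -
    have "((\<lambda>y. q y - c) \<longlongrightarrow> 0) (at x)"
    proof (rule tendsto_rabs_zero_cancel, rule sandwich0)
      show "\<forall>\<^sub>F y in at x. 0 \<le> \<bar>q y - c\<bar>" by simp
      show "\<forall>\<^sub>F y in at x. \<bar>q y - c\<bar> \<le> K1 * \<bar>\<alpha> y - r0\<bar> * exp (\<bar>\<alpha> y - r0\<bar> * a2)" using qbound by simp
      show "((\<lambda>y. K1 * \<bar>\<alpha> y - r0\<bar> * exp (\<bar>\<alpha> y - r0\<bar> * a2)) \<longlongrightarrow> 0) (at x)" by (rule lim_small[OF dl])
    qed
    then show ?thesis by (rule LIM_zero_cancel)
  qed
  have Jlim: "((\<lambda>y. Jd i y) \<longlongrightarrow> Jd i x) (at x)" for i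
  proof -
    have "((\<lambda>y. Jd i y - Jd i x) \<longlongrightarrow> 0) (at x)"
    proof (rule tendsto_rabs_zero_cancel, rule sandwich0)
      show "\<forall>\<^sub>F y in at x. 0 \<le> \<bar>Jd i y - Jd i x\<bar>" by simp
      show "\<forall>\<^sub>F y in at x. \<bar>Jd i y - Jd i x\<bar> \<le> (a2 * Linf_nrm a2 (Dp i x) * exp (\<bar>r0\<bar> * a2) * a2) * \<bar>\<alpha> y - r0\<bar> * exp (\<bar>\<alpha> y - r0\<bar> * a2)"
        using Jbound by simp
      show "((\<lambda>y. (a2 * Linf_nrm a2 (Dp i x) * exp (\<bar>r0\<bar> * a2) * a2) * \<bar>\<alpha> y - r0\<bar> * exp (\<bar>\<alpha> y - r0\<bar> * a2)) \<longlongrightarrow> 0) (at x)"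
        by (rule lim_small[OF dl])
    qed
    then show ?thesis by (rule LIM_zero_cancel)
  qed
  define U where "U = (\<lambda>y. a2 * (Linf_nrm a2 (rem p Dp x y) / norm (y - x)) * exp (\<bar>\<alpha> y\<bar> * a2) * inverse \<bar>q y\<bar>
      + (\<Sum>i\<in>UNIV. \<bar>Jd i y / q y - Jd i x / c\<bar>))"
  have Ulim: "(U \<longlongrightarrow> 0) (at x)"
  proof -
    have "(U \<longlongrightarrow> a2 * 0 * exp (\<bar>\<alpha> x\<bar> * a2) * inverse \<bar>c\<bar> + (\<Sum>i\<in>UNIV. \<bar>Jd i x / c - Jd i x / c\<bar>)) (at x)"
      unfolding U_def using cneg
      by (intro tendsto_intros pd ac qlim Jlim) auto
    then show ?thesis by simp
  qed
  have evq: "\<forall>\<^sub>F y in at x. q y < c / 2"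
    by (rule order_tendstoD(2)[OF qlim]) (use cneg in simp)
  show ?thesis
  proof (rule sandwich0)
    show "\<forall>\<^sub>F y in at x. 0 \<le> \<bar>rem \<alpha> F x y\<bar> / norm (y - x)" by simp
    show "((U) \<longlongrightarrow> 0) (at x)" by (rule Ulim)
    have "\<forall>\<^sub>F y in at x. y \<noteq> x" by (simp add: eventually_at_filter)
    then show "\<forall>\<^sub>F y in at x. \<bar>rem \<alpha> F x y\<bar> / norm (y - x) \<le> U y"
      using evq
    proof eventually_elim
      case (elim y)
      define h where "h = y - x"
      define S where "S = (\<Sum>i\<in>UNIV. h $ i * Jd i y)"
      have qy: "q y \<noteq> 0" and qlt: "q y < 0" using elim cneg by auto
      have np: "0 < norm h" using elim by (simp add: h_def)
      have e1: "\<alpha> y - \<alpha> x = - (A y + S) / q y"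
        using ident[of y] qy unfolding S_def h_def r0_def by (simp add: field_simps)
      have sumF: "(\<Sum>i\<in>UNIV. h $ i *\<^sub>R F i x) = - (\<Sum>i\<in>UNIV. h $ i * Jd i x) / c"
        by (simp add: Fx sum_divide_distrib sum_negf)
      have sumD: "(\<Sum>i\<in>UNIV. h $ i * (Jd i y / q y - Jd i x / c)) = S / q y - (\<Sum>i\<in>UNIV. h $ i * Jd i x) / c"
        unfolding S_def by (simp add: right_diff_distrib sum_subtractf sum_divide_distrib)
      have e2: "rem \<alpha> F x y = - A y / q y - (\<Sum>i\<in>UNIV. h $ i * (Jd i y / q y - Jd i x / c))"
        unfolding rem_def h_def[symmetric] e1 sumF sumD using qy by (simp add: field_simps)
      have "\<bar>rem \<alpha> F x y\<bar> \<le> \<bar>A y\<bar> / \<bar>q y\<bar> + (\<Sum>i\<in>UNIV. \<bar>h $ i\<bar> * \<bar>Jd i y / q y - Jd i x / c\<bar>)"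
        unfolding e2
        by (rule order_trans[OF abs_triangle_ineq4]) (auto intro!: add_mono order_trans[OF sum_abs] simp: abs_mult)
      also have "\<dots> \<le> \<bar>A y\<bar> / \<bar>q y\<bar> + norm h * (\<Sum>i\<in>UNIV. \<bar>Jd i y / q y - Jd i x / c\<bar>)"
        by (auto simp: sum_distrib_left intro!: sum_mono mult_right_mono component_le_norm_cart)
      finally have b1: "\<bar>rem \<alpha> F x y\<bar> \<le> \<bar>A y\<bar> / \<bar>q y\<bar> + norm h * (\<Sum>i\<in>UNIV. \<bar>Jd i y / q y - Jd i x / c\<bar>)" .
      have "\<bar>rem \<alpha> F x y\<bar> / norm h \<le> (\<bar>A y\<bar> / \<bar>q y\<bar> + norm h * (\<Sum>i\<in>UNIV. \<bar>Jd i y / q y - Jd i x / c\<bar>)) / norm h"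
        by (rule divide_right_mono[OF b1]) simp
      also have "\<dots> = \<bar>A y\<bar> / norm h * inverse \<bar>q y\<bar> + (\<Sum>i\<in>UNIV. \<bar>Jd i y / q y - Jd i x / c\<bar>)"
        using np by (simp add: field_simps)
      also have "\<dots> \<le> a2 * (Linf_nrm a2 (rem p Dp x y) / norm h) * exp (\<bar>\<alpha> y\<bar> * a2) * inverse \<bar>q y\<bar>
          + (\<Sum>i\<in>UNIV. \<bar>Jd i y / q y - Jd i x / c\<bar>)"
      proof -
        have "\<bar>A y\<bar> / norm h \<le> a2 * Linf_nrm a2 (rem p Dp x y) * exp (\<bar>\<alpha> y\<bar> * a2) / norm h"
          by (rule divide_right_mono[OF Abound]) simp
        then have "\<bar>A y\<bar> / norm h \<le> a2 * (Linf_nrm a2 (rem p Dp x y) / norm h) * exp (\<bar>\<alpha> y\<bar> * a2)"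
          by (simp add: field_simps)
        then show ?thesis by (intro add_mono mult_right_mono) auto
      qed
      finally show ?case unfolding U_def h_def .
    qed
  qed
qed

lemma nC_cong: "(\<And>a. a \<in> {0..a2} \<Longrightarrow> u a = v a) \<Longrightarrow> nC a2 u = nC a2 v"
  unfolding nC_def by (rule SUP_cong) auto

lemma Ck_cong_C:
  assumes eq: "\<And>x a. a \<in> {0..a2} \<Longrightarrow> f x a = g x a" and f: "Ck_wrt (SC a2) (nC a2) k f"
  shows "Ck_wrt (SC a2) (nC a2) k g"
proof (cases k)
  case 0
  have SCg: "SC a2 (g x)" for x
    using f 0 unfolding SC_def by (auto intro: continuous_on_eq[of _ "f x"] simp: eq)
  have "nC a2 (g y - g x) = nC a2 (f y - f x)" for x y by (rule nC_cong) (simp add: eq)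
  then show ?thesis using f 0 SCg by simp
next
  case (Suc m)
  from f[unfolded Suc Ck_Suc_iff] obtain D where D: "\<forall>x. SC a2 (f x)" "\<forall>i x. SC a2 (D i x)"
    "\<forall>x. ((\<lambda>y. nC a2 (rem f D x y) / norm (y - x)) \<longlongrightarrow> 0) (at x)" "\<forall>i. Ck_wrt (SC a2) (nC a2) m (D i)" by blast
  have SCg: "SC a2 (g x)" for x
    using D(1) unfolding SC_def by (auto intro: continuous_on_eq[of _ "f x"] simp: eq)
  have nceq: "nC a2 (rem g D x y) = nC a2 (rem f D x y)" for x y by (rule nC_cong) (simp add: eq rem_app)
  show ?thesis unfolding Suc Ck_Suc_iff
    apply (intro conjI exI[of _ D] allI)
    using D SCg by (simp_all add: nceq)
qed

lemma Ck_R_cont_iff: "Ck_wrt (\<lambda>_. True) abs 0 \<alpha> \<longleftrightarrow> (\<forall>x. (\<alpha> \<longlongrightarrow> \<alpha> x) (at x))"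
  by (simp add: tendsto_rabs_zero_iff LIM_zero_iff)

theorem mainTheorem20:
  fixes k :: nat and a2 :: real
    and mu beta :: "real^'n \<Rightarrow> real \<Rightarrow> real"
    and beta_low :: "real \<Rightarrow> real"
    and alpha :: "real^'n \<Rightarrow> real"
    and phi :: "real^'n \<Rightarrow> real \<Rightarrow> real"
  assumes a2_pos: "a2 > 0"
    and mu_pos: "\<forall>x. Linf_plus a2 (mu x)"
    and beta_pos: "\<forall>x. Linf_plus a2 (beta x)"
    and mu_Ck: "Ck_wrt (Linf_mem a2) (Linf_nrm a2) k mu"
    and beta_Ck: "Ck_wrt (Linf_mem a2) (Linf_nrm a2) k beta"
    and beta_low_meas: "beta_low \<in> borel_measurable (lebesgue_on {0<..<a2})"
    and beta_low_le: "\<forall>x. AE a in lebesgue_on {0<..<a2}. beta_low a \<le> beta x a"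
    and beta_low_nonzero: "\<not> (AE a in lebesgue_on {0<..<a2}. beta_low a = 0)"
    and alpha_eq: "\<forall>x. (LINT a:{0..a2}|lebesgue. beta x a * exp (- alpha x * a) * surv mu 0 a x) = 1"
    and phi_def: "\<forall>x a. phi x a = exp (- alpha x * a) * surv mu 0 a x"
  shows "Ck_wrt (CR_mem a2) (CR_nrm a2) k (\<lambda>x. (phi x, alpha x))"
proof -
  have a2: "0 < a2" using a2_pos by simp
  have a2': "0 \<le> a2" using a2 by simp
  define w where "w = (\<lambda>x. expf (Pm a2 (mu x)))"
  define p where "p = (\<lambda>x. pmul (beta x) (w x))"
  have wC: "Ck_wrt (SC a2) (nC a2) k w" unfolding w_def by (rule Ck_expf[OF a2' Ck_Pm[OF a2 mu_Ck]])
  have pC: "Ck_wrt (Linf_mem a2) (Linf_nrm a2) k p" unfolding p_def by (rule Ck_Lmul[OF a2 beta_Ck wC])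
  have pm: "\<And>x. Linf_mem a2 (p x)" using Ck_S[OF pC] .
  have mum: "\<And>x. Linf_mem a2 (mu x)" using Ck_S[OF mu_Ck] .
  have pp: "\<And>x. AE a in lebesgue_on {0<..<a2}. 0 \<le> p x a"
  proof -
    fix x
    have "AE a in lebesgue_on {0<..<a2}. 0 \<le> beta x a" using beta_pos by (simp add: Linf_plus_def)
    then show "AE a in lebesgue_on {0<..<a2}. 0 \<le> p x a"
      by eventually_elim (simp add: p_def pmul_def w_def expf_def)
  qed
  have surv_eq: "surv mu 0 a x = w x a" if a: "a \<in> {0..a2}" for a x
  proof -
    have "(LINT s:{0..a}|lebesgue. mu x s) = integral {0..a} (mu x)"
      using Linf_conv(3,4)[OF a2 mum[of x], of a] a by simp
    then show ?thesis using a by (simp add: surv_def w_def expf_def Pm_def)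
  qed
  have one: "\<And>x. JL a2 (pmul (p x) (EE (alpha x))) = 1"
  proof -
    fix x
    have mem: "Linf_mem a2 (pmul (p x) (EE (alpha x)))" by (rule Lmul_mem(1)[OF a2 pm SC_EE])
    have "(LINT a:{0..a2}|lebesgue. beta x a * exp (- alpha x * a) * surv mu 0 a x)
        = (LINT a:{0..a2}|lebesgue. pmul (p x) (EE (alpha x)) a)"
      by (rule set_lebesgue_integral_cong) (auto simp: surv_eq p_def pmul_def EE_app)
    also have "\<dots> = JL a2 (pmul (p x) (EE (alpha x)))"
      using Linf_conv(3)[OF a2 mem, of a2] a2 by (simp add: JL_def)
    finally show "JL a2 (pmul (p x) (EE (alpha x))) = 1" using alpha_eq by simp
  qed
  have acont: "\<And>x. (alpha \<longlongrightarrow> alpha x) (at x)"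
    by (rule alpha_cont[OF a2 pm pp Ck_cont[OF good_L[OF a2] pC] one])
  have alphaC: "Ck_wrt (\<lambda>_. True) abs k alpha"
  proof (cases k)
    case 0 then show ?thesis unfolding 0 Ck_R_cont_iff using acont by simp
  next
    case (Suc k')
    note kS = this
    from pC[unfolded Suc Ck_Suc_iff] obtain Dp where Dp: "\<forall>i x. Linf_mem a2 (Dp i x)"
      "\<forall>x. ((\<lambda>y. Linf_nrm a2 (rem p Dp x y) / norm (y - x)) \<longlongrightarrow> 0) (at x)"
      "\<forall>i. Ck_wrt (Linf_mem a2) (Linf_nrm a2) k' (Dp i)" by blast
    define F where "F = (\<lambda>i x. - JL a2 (pmul (Dp i x) (EE (alpha x))) * inverse (JL a2 (pmul (p x) (mm (EE (alpha x))))))"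
    have "Ck_wrt (\<lambda>_. True) abs j alpha" if "j \<le> Suc k'" for j
      using that
    proof (induction j)
      case 0 then show ?case unfolding Ck_R_cont_iff using acont by simp
    next
      case (Suc j)
      have aj: "Ck_wrt (\<lambda>_. True) abs j alpha" using Suc by simp
      have jk: "j \<le> k'" using Suc by simp
      have EEa: "Ck_wrt (SC a2) (nC a2) j (\<lambda>x. EE (alpha x))"
        unfolding EE_def by (rule Ck_expf[OF a2' Ck_linr[OF a2' aj]])
      have Dpj: "Ck_wrt (Linf_mem a2) (Linf_nrm a2) j (Dp i)" for i
        by (rule Ck_le_mono[OF good_L[OF a2] Dp(3)[rule_format] jk])
      have pj: "Ck_wrt (Linf_mem a2) (Linf_nrm a2) j p"
        by (rule Ck_le_mono[OF good_L[OF a2] pC]) (use jk kS in simp)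
      have num: "Ck_wrt (\<lambda>_. True) abs j (\<lambda>x. JL a2 (pmul (Dp i x) (EE (alpha x))))" for i
        by (rule Ck_JL[OF a2 Ck_Lmul[OF a2 Dpj EEa]])
      have den: "Ck_wrt (\<lambda>_. True) abs j (\<lambda>x. JL a2 (pmul (p x) (mm (EE (alpha x)))))"
        by (rule Ck_JL[OF a2 Ck_Lmul[OF a2 pj Ck_mm[OF a2' EEa]]])
      have dne: "\<forall>x. JL a2 (pmul (p x) (mm (EE (alpha x)))) \<noteq> 0"
        using c_neg[OF a2 pm pp nz_of_one[OF a2 pm SC_EE one]] by (metis less_irrefl)
      have FC: "Ck_wrt (\<lambda>_. True) abs j (F i)" for i
        unfolding F_def by (rule Ck_rmul[OF Ck_uminus[OF num] Ck_inv[OF den dne]])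
      show ?case unfolding Ck_Suc_iff
      proof (intro conjI exI[of _ F] allI)
        fix x
        show "((\<lambda>y. \<bar>rem alpha F x y\<bar> / norm (y - x)) \<longlongrightarrow> 0) (at x)"
          by (rule alpha_diff[OF a2 pm pp _ Dp(2)[rule_format] acont one]) (use Dp(1) in \<open>simp_all add: F_def\<close>)
      qed (simp_all add: FC)
    qed
    then show ?thesis using kS by simp
  qed
  have EEa: "Ck_wrt (SC a2) (nC a2) k (\<lambda>x. EE (alpha x))"
    unfolding EE_def by (rule Ck_expf[OF a2' Ck_linr[OF a2' alphaC]])
  have phiC0: "Ck_wrt (SC a2) (nC a2) k (\<lambda>x. pmul (EE (alpha x)) (w x))"
    by (rule Ck_pmul[OF a2' EEa wC])
  have phiC: "Ck_wrt (SC a2) (nC a2) k phi"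
    by (rule Ck_cong_C[OF _ phiC0]) (simp add: phi_def pmul_def EE_app surv_eq)
  show ?thesis by (rule Ck_pair[OF a2' phiC alphaC])
qed

end
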